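(* Let $T,p,q,K\ge1$, let $\mathbf X\in\mathbb R^{T\times p}$ and $\mathbf R\in\mathbb R^{T\times q}$ (entries $r_{t\ell}\ge 0$) be deterministic matrices, let $G_1,\dots,G_K$ be a partition of $\{1,\dots,p\}$, and let $\boldsymbol\phi^*\in\mathbb R^p$, $\boldsymbol\alpha^*\in\mathbb R^q$ with $\mathbf R_{t,:}\boldsymbol\alpha^*>0$ for all $t$. Assume the observations $\mathbf Y\in\mathbb R^T$ satisfy $\mathrm{diag}(\mathbf Y)\mathbf R\boldsymbol\alpha^*=\mathbf X\boldsymbol\phi^*+\boldsymbol\xi$ with $\boldsymbol\xi\sim\mathcal N(0,\mathbf I_T)$. Let $\varepsilon\in(0,1)$ and set $$\lambda_k=2\big(r_k+2\sqrt{r_k\log(K/\varepsilon)}+2\log(K/\varepsilon)\big)^{1/2},\quad k=1,\dots,K.$$ Assume that Assumption GRE$(K^*,\kappa)$ holds with $K^*=\mathrm{Card}(\mathcal K^* )$ and some $\kappa>0$. If $T\ge 8C_4^2\log(2q/\varepsilon)$, then, with probability at least $1-2\varepsilon$, the ScHeDs $(\widehat{\boldsymbol\phi},\widehat{\boldsymbol\alpha})$ computed with these $\lambda_k$ satisfies $$\big|\mathbf X(\widehat{\boldsymbol\phi}-\boldsymbol\phi^* )\big|_2\le C_4\sqrt{(8/T)\log(2q/\varepsilon)}\,\big(2|\mathbf X\boldsymbol\phi^*|_2+|\boldsymbol\xi|_2\big)+\frac{8}{\kappa}\sqrt{2s^*+3K^*\log(K/\varepsilon)}+\big|\mathrm{diag}(\mathbf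 Y)\mathbf R(\widehat{\boldsymbol\alpha}-\boldsymbol\alpha^* )\big|_2.$$
   Context: Notation: $\mathrm{diag}(\mathbf v)$ is the diagonal matrix with diagonal $\mathbf v$; $\mathbf A_{t,:}$, $\mathbf A_{:,j}$ are rows/columns; $\mathbf X_{:,G_k}$ and $\boldsymbol\phi_{G_k}$ are the column-submatrix and subvector indexed by $G_k$; $r_k=\mathrm{rank}(\mathbf X_{:,G_k})$; $\boldsymbol\Pi_{G_k}=\mathbf X_{:,G_k}(\mathbf X_{:,G_k}^\top\mathbf X_{:,G_k})^+\mathbf X_{:,G_k}^\top$ (orthogonal projector onto the range of $\mathbf X_{:,G_k}$). ScHeDs: given $\boldsymbol\lambda\in\mathbb R_+^K$, $(\widehat{\boldsymbol\phi},\widehat{\boldsymbol\alpha})$ where $(\widehat{\boldsymbol\phi},\widehat{\boldsymbol\alpha},\widehat{\mathbf v})$ minimizes $\sum_{k}\lambda_k|\mathbf X_{:,G_k}\boldsymbol\phi_{G_k}|_2$ over $(\boldsymbol\phi,\boldsymbol\alpha,\mathbf v)\in\mathbb R^p\times\mathbb R^q\times\mathbb R_+^T$ subject to $|\boldsymbol\Pi_{G_k}(\mathrm{diag}(\mathbf Y)\mathbf R\boldsymbol\alpha-\mathbf X\boldsymbol\phi)|_2\le\lambda_k$ for all $k$; $\mathbf R^\top\mathbf v\le\mathbf R^\top\mathrm{diag}(\mathbf Y)(\mathrm{diag}(\mathbf Y)\mathbf R\boldsymbol\alpha-\mathbf X\boldsymbol\phi)$ coordinatewise; and $1/v_t\le\mathbf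 R_{t,:}\boldsymbol\alpha$ for all $t$. Sparsity: $\mathcal K^*=\{k:|\boldsymbol\phi^*_{G_k}|_1\ne0\}$, $s^*=\sum_{k\in\mathcal K^*}r_k$. Assumption GRE$(N,\kappa)$: for every $\mathcal K\subset\{1,\dots,K\}$ with $\mathrm{Card}(\mathcal K)\le N$ and every $\boldsymbol\delta\in\mathbb R^p$ with $\sum_{k\notin\mathcal K}\lambda_k|\mathbf X_{:,G_k}\boldsymbol\delta_{G_k}|_2\le\sum_{k\in\mathcal K}\lambda_k|\mathbf X_{:,G_k}\boldsymbol\delta_{G_k}|_2$, one has $|\mathbf X\boldsymbol\delta|_2^2\ge\kappa^2\sum_{k\in\mathcal K}|\mathbf X_{:,G_k}\boldsymbol\delta_{G_k}|_2^2$. Constants: $C_1=\max_{\ell\le q}\frac1T\sum_t\frac{r_{t\ell}^2(\mathbf X_{t,:}\boldsymbol\phi^* )^2}{(\mathbf R_{t,:}\boldsymbol\alpha^* )^2}$, $C_2=\max_{\ell\le q}\frac1T\sum_t\frac{r_{t\ell}^2}{(\mathbf R_{t,:}\boldsymbol\alpha^* )^2}$, $C_3=\min_{\ell\le q}\frac1T\sum_t\frac{r_{t\ell}}{\mathbf R_{t,:}\boldsymbol\alpha^*}$, $C_4=(\sqrt{C_2}+\sqrt{2C_1})/C_3$. *)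

theory Defs
  imports "HOL-Analysis.Analysis" "HOL-Probability.Probability"
begin

text \<open>Dimensions are finite index types: 'T (observations, T = CARD('T)),
 'p (columns of X), 'q (columns of R), 'k (groups, K = CARD('k)).
 Euclidean norm of a vector is norm.\<close>

definition restr :: "'p set \<Rightarrow> real^'p \<Rightarrow> real^'p" where
  "restr G \<phi> = (\<chi> j. if j \<in> G then \<phi> $ j else 0)"

definition Xg :: "real^'p^'T \<Rightarrow> 'p set \<Rightarrow> real^'p \<Rightarrow> real^'T" where
  "Xg X G \<phi> = X *v restr G \<phi>"

definition colspace :: "real^'p^'T \<Rightarrow> 'p set \<Rightarrow> (real^'T) set" where
  "colspace X G = range (Xg X G)"

definition grank :: "real^'p^'T \<Rightarrow> 'p set \<Rightarrow> nat" where
  "grank X G = dim (colspace X G)"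

definition Proj :: "real^'p^'T \<Rightarrow> 'p set \<Rightarrow> real^'T \<Rightarrow> real^'T" where
  "Proj X G w = closest_point (colspace X G) w"

definition dmul :: "real^'T \<Rightarrow> real^'T \<Rightarrow> real^'T" where
  "dmul y w = (\<chi> t. y $ t * w $ t)"

definition schd_obj :: "real^'p^'T \<Rightarrow> ('k \<Rightarrow> 'p set) \<Rightarrow> ('k::finite \<Rightarrow> real) \<Rightarrow> real^'p \<Rightarrow> real" where
  "schd_obj X G lam \<phi> = (\<Sum>k\<in>UNIV. lam k * norm (Xg X (G k) \<phi>))"

definition schd_feasible ::
  "real^'p^'T \<Rightarrow> real^'q^'T \<Rightarrow> ('k \<Rightarrow> 'p set) \<Rightarrow> ('k::finite \<Rightarrow> real) \<Rightarrow> real^'T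
   \<Rightarrow> real^'p \<Rightarrow> real^'q \<Rightarrow> real^'T \<Rightarrow> bool" where
  "schd_feasible X R G lam Y \<phi> \<alpha> v \<longleftrightarrow>
     (\<forall>t. v $ t \<ge> 0) \<and>
     (\<forall>k. norm (Proj X (G k) (dmul Y (R *v \<alpha>) - X *v \<phi>)) \<le> lam k) \<and>
     (\<forall>l. (transpose R *v v) $ l \<le> (transpose R *v dmul Y (dmul Y (R *v \<alpha>) - X *v \<phi>)) $ l) \<and>
     (\<forall>t. v $ t > 0 \<and> 1 / v $ t \<le> (R *v \<alpha>) $ t)"

definition schd_min ::
  "real^'p^'T \<Rightarrow> real^'q^'T \<Rightarrow> ('k \<Rightarrow> 'p set) \<Rightarrow> ('k::finite \<Rightarrow> real) \<Rightarrow> real^'T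
   \<Rightarrow> real^'p \<Rightarrow> real^'q \<Rightarrow> real^'T \<Rightarrow> bool" where
  "schd_min X R G lam Y \<phi> \<alpha> v \<longleftrightarrow>
     schd_feasible X R G lam Y \<phi> \<alpha> v \<and>
     (\<forall>\<phi>' \<alpha>' v'. schd_feasible X R G lam Y \<phi>' \<alpha>' v' \<longrightarrow>
        schd_obj X G lam \<phi> \<le> schd_obj X G lam \<phi>')"

definition Kstar :: "('k \<Rightarrow> 'p set) \<Rightarrow> real^'p \<Rightarrow> 'k set" where
  "Kstar G \<phi> = {k. (\<Sum>j\<in>G k. \<bar>\<phi> $ j\<bar>) \<noteq> 0}"

definition sstar :: "real^'p^'T \<Rightarrow> ('k \<Rightarrow> 'p set) \<Rightarrow> real^'p \<Rightarrow> nat" where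
  "sstar X G \<phi> = (\<Sum>k\<in>Kstar G \<phi>. grank X (G k))"

definition GRE :: "real^'p^'T \<Rightarrow> ('k \<Rightarrow> 'p set) \<Rightarrow> ('k::finite \<Rightarrow> real) \<Rightarrow> nat \<Rightarrow> real \<Rightarrow> bool" where
  "GRE X G lam N \<kappa> \<longleftrightarrow>
     (\<forall>Ks \<delta>. card Ks \<le> N \<longrightarrow>
        (\<Sum>k\<in>-Ks. lam k * norm (Xg X (G k) \<delta>)) \<le> (\<Sum>k\<in>Ks. lam k * norm (Xg X (G k) \<delta>)) \<longrightarrow>
        norm (X *v \<delta>) ^ 2 \<ge> \<kappa>^2 * (\<Sum>k\<in>Ks. norm (Xg X (G k) \<delta>) ^ 2))"

definition C1 :: "real^'p^'T \<Rightarrow> real^'q^('T::finite) \<Rightarrow> real^'p \<Rightarrow> real^('q::finite) \<Rightarrow> real" where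
  "C1 X R \<phi> \<alpha> = Max (range (\<lambda>l. (1 / real CARD('T)) *
      (\<Sum>t\<in>UNIV. (R $ t $ l)^2 * ((X *v \<phi>) $ t)^2 / ((R *v \<alpha>) $ t)^2)))"

definition C2 :: "real^'q^('T::finite) \<Rightarrow> real^('q::finite) \<Rightarrow> real" where
  "C2 R \<alpha> = Max (range (\<lambda>l. (1 / real CARD('T)) *
      (\<Sum>t\<in>UNIV. (R $ t $ l)^2 / ((R *v \<alpha>) $ t)^2)))"

definition C3 :: "real^'q^('T::finite) \<Rightarrow> real^('q::finite) \<Rightarrow> real" where
  "C3 R \<alpha> = Min (range (\<lambda>l. (1 / real CARD('T)) *
      (\<Sum>t\<in>UNIV. R $ t $ l / (R *v \<alpha>) $ t)))"

definition C4 :: "real^'p^'T \<Rightarrow> real^'q^('T::finite) \<Rightarrow> real^'p \<Rightarrow> real^('q::finite) \<Rightarrow> real" where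
  "C4 X R \<phi> \<alpha> = (sqrt (C2 R \<alpha>) + sqrt (2 * C1 X R \<phi> \<alpha>)) / C3 R \<alpha>"

end

theory Submission
  imports Defs
begin

lemma gauss_pointwise:
  fixes c b x :: real assumes c: "c > 0"
  shows "std_normal_density x * exp ((1-c)/2 * x^2 + b*x) =
         exp (b^2/(2*c)) / sqrt c * normal_density (b/c) (1/sqrt c) x"
proof -
  have s: "(1/sqrt c)^2 = 1/c" using c by (simp add: power_divide)
  have e: "-((x - b/c)^2) / (2*(1/c)) + b^2/(2*c) = -(x^2)/2 + ((1-c)/2 * x^2 + b*x)"
    using c by (simp add: field_simps power2_eq_square)
  have "exp (b^2/(2*c)) / sqrt c * normal_density (b/c) (1/sqrt c) x
      = exp (b^2/(2*c)) / sqrt c * (1 / sqrt (2*pi/c)) * exp (-((x - b/c)^2) / (2*(1/c)))"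
    unfolding normal_density_def s by simp
  also have "sqrt (2*pi/c) = sqrt (2*pi) / sqrt c" using c by (simp add: real_sqrt_divide)
  also have "exp (b^2/(2*c)) / sqrt c * (1 / (sqrt (2*pi) / sqrt c)) * exp (-((x - b/c)^2) / (2*(1/c)))
      = (1/sqrt (2*pi)) * (exp (-((x - b/c)^2) / (2*(1/c))) * exp (b^2/(2*c)))"
    using c by (simp add: field_simps)
  also have "\<dots> = (1/sqrt (2*pi)) * exp (-((x - b/c)^2) / (2*(1/c)) + b^2/(2*c))"
    by (simp only: exp_add)
  also have "\<dots> = (1/sqrt (2*pi)) * exp (-(x^2)/2) * exp ((1-c)/2 * x^2 + b*x)"
    unfolding e by (simp only: exp_add mult.assoc)
  finally show ?thesis by (simp add: std_normal_density_def)
qed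

lemma gauss_nn:
  fixes c b :: real assumes c: "c > 0"
  shows "(\<integral>\<^sup>+x. ennreal (std_normal_density x * exp ((1-c)/2 * x^2 + b*x)) \<partial>lborel)
       = ennreal (exp (b^2/(2*c)) / sqrt c)"
proof -
  have "(\<integral>\<^sup>+x. ennreal (std_normal_density x * exp ((1-c)/2 * x^2 + b*x)) \<partial>lborel)
     = (\<integral>\<^sup>+x. ennreal (exp (b^2/(2*c)) / sqrt c) * ennreal (normal_density (b/c) (1/sqrt c) x) \<partial>lborel)"
    using c by (intro nn_integral_cong) (subst gauss_pointwise[OF c], subst ennreal_mult, auto)
  also have "\<dots> = ennreal (exp (b^2/(2*c)) / sqrt c) * (\<integral>\<^sup>+x. ennreal (normal_density (b/c) (1/sqrt c) x) \<partial>lborel)"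
    by (rule nn_integral_cmult) simp
  also have "(\<integral>\<^sup>+x. ennreal (normal_density (b/c) (1/sqrt c) x) \<partial>lborel) = 1"
    using c by (subst nn_integral_eq_integral) auto
  finally show ?thesis by simp
qed


lemma ln_lower1:
  fixes z :: real assumes z: "0 \<le> z"
  shows "z - z^2/2 \<le> ln (1 + z)"
proof -
  let ?f = "\<lambda>y::real. ln (1 + y) - y + y^2/2"
  have "?f 0 \<le> ?f z"
  proof (rule DERIV_nonneg_imp_increasing_open[OF z])
    fix x :: real assume x: "0 < x" "x < z"
    show "\<exists>y. DERIV ?f x :> y \<and> 0 \<le> y"
    proof (intro exI conjI)
      show "DERIV ?f x :> (1/(1+x) - 1 + x)"
        using x by (auto intro!: derivative_eq_intros)
      have "1/(1+x) - 1 + x = x^2/(1+x)" using x by (simp add: field_simps power2_eq_square)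
      thus "0 \<le> 1/(1+x) - 1 + x" using x by simp
    qed
  next
    show "continuous_on {0..z} ?f"
      by (intro continuous_intros) auto
  qed
  thus ?thesis by simp
qed

lemma ln_lower2:
  fixes u :: real assumes u: "0 \<le> u" "u < 1"
  shows "- u - u^2/(2*(1-u)) \<le> ln (1 - u)"
proof -
  let ?f = "\<lambda>y::real. ln (1 - y) + y + y^2/(2*(1-y))"
  have "?f 0 \<le> ?f u"
  proof (rule DERIV_nonneg_imp_increasing_open[OF u(1)])
    fix x :: real assume x: "0 < x" "x < u"
    show "\<exists>y. DERIV ?f x :> y \<and> 0 \<le> y"
    proof (intro exI conjI)
      show "DERIV ?f x :> (-1/(1-x) + 1 + ((2*x)*(2*(1-x)) + x^2*2)/(2*(1-x))^2)"
        using x u by (auto intro!: derivative_eq_intros simp: power2_eq_square)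
      have "-1/(1-x) + 1 + ((2*x)*(2*(1-x)) + x^2*2)/(2*(1-x))^2 = x^2/(2*(1-x)^2)"
        proof -
          have d: "1 - x \<noteq> 0" using x u by simp
          show ?thesis using d by (simp add: divide_simps) (simp add: algebra_simps power2_eq_square)
        qed
      thus "0 \<le> -1/(1-x) + 1 + ((2*x)*(2*(1-x)) + x^2*2)/(2*(1-x))^2" using x by simp
    qed
  next
    show "continuous_on {0..u} ?f"
      using u by (intro continuous_intros) auto
  qed
  thus ?thesis by simp
qed


locale gnoise = prob_space M for M :: "'a measure" +
  fixes \<xi> :: "'a \<Rightarrow> real^'T::finite"
  assumes indep: "indep_vars (\<lambda>_. borel) (\<lambda>t \<omega>. \<xi> \<omega> $ t) UNIV"
    and dist: "\<And>t. distributed M lborel (\<lambda>\<omega>. \<xi> \<omega> $ t) (\<lambda>x. ennreal (std_normal_density x))"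
begin

lemma xi_meas[measurable]: "(\<lambda>\<omega>. \<xi> \<omega> $ t) \<in> borel_measurable M"
  using distributed_measurable[OF dist[of t]] by simp

lemma one_dim:
  assumes c: "c > 0"
  shows "(\<integral>\<^sup>+\<omega>. ennreal (exp ((1-c)/2 * (\<xi> \<omega> $ t)^2 + b * (\<xi> \<omega> $ t))) \<partial>M)
       = ennreal (exp (b^2/(2*c)) / sqrt c)"
proof -
  have "(\<integral>\<^sup>+\<omega>. ennreal (exp ((1-c)/2 * (\<xi> \<omega> $ t)^2 + b * (\<xi> \<omega> $ t))) \<partial>M)
     = (\<integral>\<^sup>+x. ennreal (std_normal_density x) * ennreal (exp ((1-c)/2 * x^2 + b*x)) \<partial>lborel)"
    by (rule distributed_nn_integral[OF dist, symmetric]) simp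
  also have "\<dots> = (\<integral>\<^sup>+x. ennreal (std_normal_density x * exp ((1-c)/2 * x^2 + b*x)) \<partial>lborel)"
    by (intro nn_integral_cong) (simp add: ennreal_mult)
  also have "\<dots> = ennreal (exp (b^2/(2*c)) / sqrt c)" by (rule gauss_nn[OF c])
  finally show ?thesis .
qed

lemma prod_dim:
  assumes c: "\<And>t. c t > 0"
  shows "(\<integral>\<^sup>+\<omega>. ennreal (exp (\<Sum>t\<in>UNIV. (1 - c t)/2 * (\<xi> \<omega> $ t)^2 + b t * (\<xi> \<omega> $ t))) \<partial>M)
       = ennreal (\<Prod>t\<in>UNIV. exp ((b t)^2/(2 * c t)) / sqrt (c t))"
proof -
  have "(\<integral>\<^sup>+\<omega>. ennreal (exp (\<Sum>t\<in>UNIV. (1 - c t)/2 * (\<xi> \<omega> $ t)^2 + b t * (\<xi> \<omega> $ t))) \<partial>M)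
     = (\<integral>\<^sup>+\<omega>. (\<Prod>t\<in>UNIV. ennreal (exp ((1 - c t)/2 * (\<xi> \<omega> $ t)^2 + b t * (\<xi> \<omega> $ t)))) \<partial>M)"
    by (intro nn_integral_cong) (simp add: exp_sum prod_ennreal)
  also have "\<dots> = (\<Prod>t\<in>UNIV. (\<integral>\<^sup>+\<omega>. ennreal (exp ((1 - c t)/2 * (\<xi> \<omega> $ t)^2 + b t * (\<xi> \<omega> $ t))) \<partial>M))"
    by (intro indep_vars_nn_integral indep_vars_compose2[OF indep]) auto
  also have "\<dots> = (\<Prod>t\<in>UNIV. ennreal (exp ((b t)^2/(2 * c t)) / sqrt (c t)))"
    by (intro prod.cong refl one_dim c)
  also have "\<dots> = ennreal (\<Prod>t\<in>UNIV. exp ((b t)^2/(2 * c t)) / sqrt (c t))"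
    using c by (intro prod_ennreal divide_nonneg_nonneg) (auto intro: less_imp_le)
  finally show ?thesis .
qed

end


lemma factor_bound:
  fixes s w b :: real assumes "s \<ge> 0" "w \<ge> 0"
  shows "exp (s*w) * (exp (b^2/(2*(1+2* s*w))) / sqrt (1+2* s*w)) \<le> exp (s^2*w^2 + b^2/2)"
proof -
  define z where "z = 2* s*w"
  have z: "z \<ge> 0" using assms by (simp add: z_def)
  have c: "1 + z > 0" using z by simp
  have "z - z^2/2 \<le> ln (1+z)" by (rule ln_lower1[OF z])
  hence "s*w - s^2*w^2 \<le> ln (1+z) / 2" by (simp add: z_def power2_eq_square field_simps)
  also have "\<dots> = ln (sqrt (1+z))" using c by (simp add: ln_sqrt)
  finally have "exp (s*w - s^2*w^2) \<le> sqrt (1+z)"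
    using c by (subst (asm) ln_ge_iff) auto
  hence sq: "exp (s*w) \<le> exp (s^2*w^2) * sqrt (1+z)"
    by (simp add: exp_diff field_simps)
  have bb: "b^2/(2*(1+z)) \<le> b^2/2"
    using z by (intro divide_left_mono) auto
  have "exp (s*w) * (exp (b^2/(2*(1+z))) / sqrt (1+z)) \<le> exp (s^2*w^2) * sqrt (1+z) * (exp (b^2/2) / sqrt (1+z))"
    using sq bb c by (intro mult_mono divide_right_mono) auto
  also have "\<dots> = exp (s^2*w^2 + b^2/2)" using c by (simp add: exp_add)
  finally show ?thesis by (simp add: z_def mult.assoc)
qed

context gnoise begin

lemma tail_b:
  fixes w m :: "'T \<Rightarrow> real" and u V x :: real
  assumes w: "\<And>t. w t \<ge> 0" and u: "u > 0"
    and V: "(\<Sum>t\<in>UNIV. (w t)^2 * (1 + (m t)^2/2)) \<le> V" "V > 0" and ux: "x \<le> u^2/(4*V)"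
  shows "prob {\<omega>\<in>space M. (\<Sum>t\<in>UNIV. w t * ((\<xi> \<omega> $ t)^2 - 1 + m t * \<xi> \<omega> $ t)) \<le> -u} \<le> exp (-x)"
proof -
  define s where "s = u/(2*V)"
  have s: "s > 0" using u V by (simp add: s_def)
  define f where "f = (\<lambda>\<omega>. (\<Sum>t\<in>UNIV. w t * ((\<xi> \<omega> $ t)^2 - 1 + m t * \<xi> \<omega> $ t)))"
  have fm[measurable]: "f \<in> borel_measurable M" unfolding f_def by measurable
  define c where "c = (\<lambda>t. 1 + 2* s*w t)"
  define b where "b = (\<lambda>t. - s * w t * m t)"
  have c: "\<And>t. c t > 0" using s w unfolding c_def by (smt (verit) mult_nonneg_nonneg)
  have eq: "exp (- s * f \<omega>) = exp (\<Sum>t\<in>UNIV. s * w t) * exp (\<Sum>t\<in>UNIV. (1 - c t)/2 * (\<xi> \<omega> $ t)^2 + b t * (\<xi> \<omega> $ t))" for \<omega>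
    unfolding f_def c_def b_def
    by (simp add: exp_add[symmetric] sum.distrib[symmetric] sum_distrib_left algebra_simps)
  have "emeasure M {\<omega>\<in>space M. f \<omega> \<le> -u} \<le>
      ennreal (exp (s * (-u))) * nn_integral M (\<lambda>\<omega>. ennreal (exp (- s * f \<omega>)) * indicator (space M) \<omega>)"
    by (rule Chernoff_ineq_nn_integral_le[OF s]) auto
  also have "nn_integral M (\<lambda>\<omega>. ennreal (exp (- s * f \<omega>)) * indicator (space M) \<omega>)
      = nn_integral M (\<lambda>\<omega>. ennreal (exp (\<Sum>t\<in>UNIV. s * w t)) * ennreal (exp (\<Sum>t\<in>UNIV. (1 - c t)/2 * (\<xi> \<omega> $ t)^2 + b t * (\<xi> \<omega> $ t))))"
    using eq by (intro nn_integral_cong) (simp add: ennreal_mult)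
  also have "\<dots> = ennreal (exp (\<Sum>t\<in>UNIV. s * w t)) * nn_integral M (\<lambda>\<omega>. ennreal (exp (\<Sum>t\<in>UNIV. (1 - c t)/2 * (\<xi> \<omega> $ t)^2 + b t * (\<xi> \<omega> $ t))))"
    by (rule nn_integral_cmult) simp
  also have "\<dots> = ennreal (exp (\<Sum>t\<in>UNIV. s * w t)) * ennreal (\<Prod>t\<in>UNIV. exp ((b t)^2/(2 * c t)) / sqrt (c t))"
    by (simp only: prod_dim[OF c])
  also have "\<dots> = ennreal (\<Prod>t\<in>UNIV. exp (s * w t) * (exp ((b t)^2/(2 * c t)) / sqrt (c t)))"
  proof -
    have "exp (\<Sum>t\<in>UNIV. s * w t) * (\<Prod>t\<in>UNIV. exp ((b t)^2/(2 * c t)) / sqrt (c t))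
        = (\<Prod>t\<in>UNIV. exp (s * w t) * (exp ((b t)^2/(2 * c t)) / sqrt (c t)))"
      by (simp add: exp_sum prod.distrib[symmetric])
    moreover have "0 \<le> (\<Prod>t\<in>UNIV. exp ((b t)^2/(2 * c t)) / sqrt (c t))"
      using c by (intro prod_nonneg divide_nonneg_nonneg) (auto intro: less_imp_le)
    ultimately show ?thesis by (simp add: ennreal_mult[symmetric])
  qed
  also have "\<dots> \<le> ennreal (\<Prod>t\<in>UNIV. exp (s^2 * (w t)^2 + (b t)^2/2))"
  proof (intro ennreal_leI prod_mono conjI)
    fix t :: 'T
    show "0 \<le> exp (s * w t) * (exp ((b t)^2/(2 * c t)) / sqrt (c t))" using c[of t] by simp
    show "exp (s * w t) * (exp ((b t)^2/(2 * c t)) / sqrt (c t)) \<le> exp (s^2 * (w t)^2 + (b t)^2/2)"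
      unfolding c_def using factor_bound[of s "w t" "b t"] s w[of t] by simp
  qed
  also have "(\<Prod>t\<in>UNIV. exp (s^2 * (w t)^2 + (b t)^2/2)) = exp (s^2 * (\<Sum>t\<in>UNIV. (w t)^2 * (1 + (m t)^2/2)))"
    by (simp add: exp_sum[symmetric] sum_distrib_left b_def algebra_simps power_mult_distrib)
  finally have "emeasure M {\<omega>\<in>space M. f \<omega> \<le> -u} \<le> ennreal (exp (s * (-u))) * ennreal (exp (s^2 * (\<Sum>t\<in>UNIV. (w t)^2 * (1 + (m t)^2/2))))"
    by (simp add: mult_left_mono)
  also have "\<dots> \<le> ennreal (exp (s * (-u))) * ennreal (exp (s^2 * V))"
    using V s by (intro mult_left_mono ennreal_leI) (auto intro: mult_left_mono)
  also have "\<dots> = ennreal (exp (- (u^2/(4*V))))"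
    using V u by (simp add: ennreal_mult[symmetric] exp_add[symmetric] s_def power2_eq_square field_simps)
  also have "\<dots> \<le> ennreal (exp (-x))" using ux by (intro ennreal_leI) simp
  finally show ?thesis unfolding f_def by (simp add: emeasure_eq_measure)
qed

end


lemma inner_vec_sum: "(x::real^'n::finite) \<bullet> y = (\<Sum>t\<in>UNIV. x $ t * y $ t)"
  by (simp add: inner_vec_def)

context gnoise begin

lemma mgf_proj:
  fixes B :: "(real^'T) set" and s :: real
  assumes B: "finite B" "pairwise orthogonal B" "\<And>b. b \<in> B \<Longrightarrow> norm b = 1"
    and s: "0 < s" "s < 1/2"
  shows "(\<integral>\<^sup>+\<omega>. ennreal (exp (s * (\<Sum>b\<in>B. (\<Sum>t\<in>UNIV. b $ t * \<xi> \<omega> $ t)^2))) \<partial>M)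
       = ennreal ((1 / sqrt (1 - 2* s)) ^ card B)"
proof -
  define N0 where "N0 = density lborel (\<lambda>x. ennreal (std_normal_density x))"
  have N0p: "prob_space N0" unfolding N0_def by (rule prob_space_normal_density) simp
  define N where "N = PiM B (\<lambda>_. N0)"
  have Np: "prob_space N" unfolding N_def by (rule prob_space_PiM[OF N0p])
  interpret PSF: product_sigma_finite "\<lambda>_::real^'T. N0"
    unfolding product_sigma_finite_def using N0p by (simp add: prob_space_imp_sigma_finite)
  interpret PS: pair_sigma_finite M N
    by (intro pair_sigma_finite.intro prob_space_imp_sigma_finite prob_space_axioms Np)
  have sN0[simp, measurable_cong]: "sets N0 = sets borel" unfolding N0_def by simp
  define k where "k = sqrt (2* s)"
  have k2: "k^2 = 2* s" unfolding k_def using s by simp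
  define z where "z = (\<lambda>b \<omega>. (\<Sum>t\<in>UNIV. b $ t * \<xi> \<omega> $ t))"
  have zm[measurable]: "z b \<in> borel_measurable M" for b unfolding z_def by measurable
  define F where "F = (\<lambda>\<omega> (g::real^'T \<Rightarrow> real). (\<Prod>b\<in>B. ennreal (exp (k * g b * z b \<omega>))))"
  have one1: "(\<integral>\<^sup>+x. ennreal (exp (a * x)) \<partial>N0) = ennreal (exp (a^2/2))" for a
  proof -
    have "(\<integral>\<^sup>+x. ennreal (exp (a * x)) \<partial>N0) = (\<integral>\<^sup>+x. ennreal (std_normal_density x * exp ((1-1)/2 * x^2 + a*x)) \<partial>lborel)"
      unfolding N0_def by (subst nn_integral_density) (auto simp: ennreal_mult[symmetric] mult.commute)
    also have "\<dots> = ennreal (exp (a^2/(2*1)) / sqrt 1)" by (rule gauss_nn) simp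
    finally show ?thesis by simp
  qed
  have step1: "(\<integral>\<^sup>+g. F \<omega> g \<partial>N) = ennreal (exp (s * (\<Sum>b\<in>B. (z b \<omega>)^2)))" for \<omega>
  proof -
    have "(\<integral>\<^sup>+g. F \<omega> g \<partial>N) = (\<Prod>b\<in>B. (\<integral>\<^sup>+x. ennreal (exp (k * x * z b \<omega>)) \<partial>N0))"
      unfolding F_def N_def apply (rule PSF.product_nn_integral_prod) apply (simp add: B) apply measurable done
    also have "\<dots> = (\<Prod>b\<in>B. ennreal (exp (s * (z b \<omega>)^2)))"
    proof (intro prod.cong refl)
      fix b
      have "(\<integral>\<^sup>+x. ennreal (exp (k * x * z b \<omega>)) \<partial>N0) = (\<integral>\<^sup>+x. ennreal (exp ((k * z b \<omega>) * x)) \<partial>N0)"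
        by (simp add: mult_ac)
      also have "\<dots> = ennreal (exp ((k * z b \<omega>)^2/2))" by (rule one1)
      also have "(k * z b \<omega>)^2/2 = s * (z b \<omega>)^2" by (simp add: power_mult_distrib k2)
      finally show "(\<integral>\<^sup>+x. ennreal (exp (k * x * z b \<omega>)) \<partial>N0) = ennreal (exp (s * (z b \<omega>)^2))" .
    qed
    also have "\<dots> = ennreal (exp (s * (\<Sum>b\<in>B. (z b \<omega>)^2)))"
      by (simp add: prod_ennreal exp_sum B sum_distrib_left)
    finally show ?thesis .
  qed
  have step3: "(\<integral>\<^sup>+\<omega>. F \<omega> g \<partial>M) = ennreal (exp (s * (\<Sum>b\<in>B. (g b)^2)))" for g
  proof -
    define v where "v = (\<Sum>b\<in>B. g b *\<^sub>R b)"
    have "F \<omega> g = ennreal (exp (\<Sum>t\<in>UNIV. (1 - 1)/2 * (\<xi> \<omega> $ t)^2 + (k * v $ t) * \<xi> \<omega> $ t))" for \<omega>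
    proof -
      have "(\<Sum>b\<in>B. k * g b * z b \<omega>) = (\<Sum>t\<in>UNIV. (k * v $ t) * \<xi> \<omega> $ t)"
        unfolding z_def v_def
        by (simp add: sum_distrib_left sum_distrib_right sum_component mult_ac sum.swap[of _ B UNIV])
      thus ?thesis unfolding F_def
        by (simp add: prod_ennreal B flip: exp_sum)
    qed
    hence "(\<integral>\<^sup>+\<omega>. F \<omega> g \<partial>M) = (\<integral>\<^sup>+\<omega>. ennreal (exp (\<Sum>t\<in>UNIV. (1 - (\<lambda>_. 1) t)/2 * (\<xi> \<omega> $ t)^2 + (k * v $ t) * \<xi> \<omega> $ t)) \<partial>M)"
      by simp
    also have "\<dots> = ennreal (\<Prod>t\<in>UNIV. exp ((k * v $ t)^2/(2 * 1)) / sqrt 1)"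
      by (rule prod_dim) simp
    also have "(\<Prod>t\<in>UNIV. exp ((k * v $ t)^2/(2 * 1)) / sqrt 1) = exp (s * (norm v)^2)"
      by (simp add: exp_sum[symmetric] power_mult_distrib k2 sum_distrib_left norm_vec_def L2_set_def
            real_sqrt_pow2 sum_nonneg)
    also have "(norm v)^2 = (\<Sum>b\<in>B. (g b)^2)"
    proof -
      have "(norm v)^2 = (\<Sum>b\<in>B. (norm (g b *\<^sub>R b))^2)"
        unfolding v_def
      proof (rule norm_sum_Pythagorean[OF B(1)])
        show "pairwise (\<lambda>i j. orthogonal (g i *\<^sub>R i) (g j *\<^sub>R j)) B"
          using B(2) unfolding pairwise_def by (auto simp: orthogonal_clauses)
      qed
      also have "\<dots> = (\<Sum>b\<in>B. (g b)^2)" using B(3) by (intro sum.cong) (auto simp: power_mult_distrib)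
      finally show ?thesis .
    qed
    finally show ?thesis .
  qed
  have Fm: "case_prod F \<in> borel_measurable (M \<Otimes>\<^sub>M N)"
    unfolding F_def N_def by measurable
  have "(\<integral>\<^sup>+\<omega>. ennreal (exp (s * (\<Sum>b\<in>B. (\<Sum>t\<in>UNIV. b $ t * \<xi> \<omega> $ t)^2))) \<partial>M)
     = (\<integral>\<^sup>+\<omega>. (\<integral>\<^sup>+g. F \<omega> g \<partial>N) \<partial>M)"
    by (simp add: step1 z_def)
  also have "\<dots> = (\<integral>\<^sup>+g. (\<integral>\<^sup>+\<omega>. F \<omega> g \<partial>M) \<partial>N)"
    by (rule PS.Fubini'[OF Fm, symmetric])
  also have "\<dots> = (\<integral>\<^sup>+g. (\<Prod>b\<in>B. ennreal (exp (s * (g b)^2))) \<partial>N)"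
    by (simp add: step3 prod_ennreal exp_sum B sum_distrib_left)
  also have "\<dots> = (\<Prod>b\<in>B. (\<integral>\<^sup>+x. ennreal (exp (s * x^2)) \<partial>N0))"
    unfolding N_def apply (rule PSF.product_nn_integral_prod) apply (simp add: B) apply measurable done
  also have "\<dots> = (\<Prod>b\<in>B. ennreal (1 / sqrt (1 - 2* s)))"
  proof (intro prod.cong refl)
    fix b
    have "(\<integral>\<^sup>+x. ennreal (exp (s * x^2)) \<partial>N0) = (\<integral>\<^sup>+x. ennreal (std_normal_density x * exp ((1-(1-2* s))/2 * x^2 + 0*x)) \<partial>lborel)"
      unfolding N0_def by (subst nn_integral_density) (auto simp: ennreal_mult[symmetric] mult.commute)
    also have "\<dots> = ennreal (exp (0^2/(2*(1-2* s))) / sqrt (1-2* s))" by (rule gauss_nn) (use s in simp)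
    finally show "(\<integral>\<^sup>+x. ennreal (exp (s * x^2)) \<partial>N0) = ennreal (1 / sqrt (1 - 2* s))" by simp
  qed
  also have "\<dots> = ennreal ((1 / sqrt (1 - 2* s)) ^ card B)"
    using s by (simp add: ennreal_power)
  finally show ?thesis .
qed

end


lemma lm_alg:
  fixes r L :: real assumes r: "r > 0" and L: "L > 0"
  defines "s \<equiv> sqrt L / (sqrt r + 2 * sqrt L)"
  shows "0 < s" "s < 1/2"
    and "- s * (r + 2 * sqrt (r * L) + 2 * L) + r * s + r * s^2 / (1 - 2 * s) = - L"
proof -
  define \<rho> where "\<rho> = sqrt r"
  define y where "y = sqrt L"
  have \<rho>: "\<rho> > 0" using r by (simp add: \<rho>_def)
  have y: "y > 0" using L by (simp add: y_def)
  have rr: "r = \<rho>^2" using r by (simp add: \<rho>_def)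
  have LL: "L = y^2" using L by (simp add: y_def)
  have rl: "sqrt (r * L) = \<rho> * y" by (simp add: \<rho>_def y_def real_sqrt_mult)
  have sd: "s = y / (\<rho> + 2 * y)" by (simp add: s_def \<rho>_def y_def)
  show "0 < s" unfolding sd using \<rho> y by simp
  show "s < 1/2" unfolding sd using \<rho> y by (simp add: field_simps)
  have d: "1 - 2 * s = \<rho> / (\<rho> + 2 * y)" unfolding sd using \<rho> y by (simp add: field_simps)
  show "- s * (r + 2 * sqrt (r * L) + 2 * L) + r * s + r * s^2 / (1 - 2 * s) = - L"
  proof -
    define D where "D = \<rho> + 2 * y"
    have D: "D > 0" using \<rho> y by (simp add: D_def)
    have d': "1 - 2 * s = \<rho> / D" using d by (simp add: D_def)
    have sd': "s = y / D" using sd by (simp add: D_def)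
    have t3: "\<rho>^2 * (y/D)^2/(\<rho>/D) = \<rho>*y^2/D" using \<rho> D by (simp add: field_simps power2_eq_square)
    have num: "-y*(\<rho>^2+2*(\<rho>*y)+2*y^2) + \<rho>^2*y + \<rho>*y^2 = -(y^2)*D"
      unfolding D_def by (simp add: algebra_simps power2_eq_square)
    have "-(y/D)*(\<rho>^2+2*(\<rho>*y)+2*y^2) + \<rho>^2*(y/D) + \<rho>*y^2/D
        = (-y*(\<rho>^2+2*(\<rho>*y)+2*y^2) + \<rho>^2*y + \<rho>*y^2) / D"
      using D by (simp add: field_simps)
    also have "\<dots> = -(y^2)" unfolding num using D by simp
    finally have m: "-(y/D)*(\<rho>^2+2*(\<rho>*y)+2*y^2) + \<rho>^2*(y/D) + \<rho>*y^2/D = -(y^2)" .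
    show ?thesis unfolding d' unfolding rl unfolding sd' rr LL using m t3 by simp
  qed
qed

context gnoise begin

lemma tail_a:
  fixes B :: "(real^'T) set" and L :: real
  assumes B: "finite B" "pairwise orthogonal B" "\<And>b. b \<in> B \<Longrightarrow> norm b = 1"
    and L: "L \<ge> 0"
  shows "prob {\<omega>\<in>space M. real (card B) + 2 * sqrt (real (card B) * L) + 2 * L
                < (\<Sum>b\<in>B. (\<Sum>t\<in>UNIV. b $ t * \<xi> \<omega> $ t)^2)} \<le> exp (-L)"
proof (cases "L = 0 \<or> card B = 0")
  case True
  show ?thesis
  proof (cases "L = 0")
    case True thus ?thesis by simp
  next
    case False
    hence "B = {}" using \<open>L = 0 \<or> card B = 0\<close> B(1) by simp
    hence e: "{\<omega>\<in>space M. real (card B) + 2 * sqrt (real (card B) * L) + 2 * L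
                < (\<Sum>b\<in>B. (\<Sum>t\<in>UNIV. b $ t * \<xi> \<omega> $ t)^2)} = {}" using L by auto
    show ?thesis unfolding e by simp
  qed
next
  case False
  hence r: "real (card B) > 0" and L0: "L > 0" using L by auto
  define r where "r = real (card B)"
  define s where "s = sqrt L / (sqrt r + 2 * sqrt L)"
  have s: "0 < s" "s < 1/2"
    and alg: "- s * (r + 2 * sqrt (r * L) + 2 * L) + r * s + r * s^2 / (1 - 2 * s) = - L"
    using lm_alg[OF r[folded r_def] L0] unfolding s_def by auto
  define f where "f = (\<lambda>\<omega>. (\<Sum>b\<in>B. (\<Sum>t\<in>UNIV. b $ t * \<xi> \<omega> $ t)^2))"
  have fm[measurable]: "f \<in> borel_measurable M" unfolding f_def by measurable
  define a where "a = r + 2 * sqrt (r * L) + 2 * L"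
  have "emeasure M {\<omega>\<in>space M. a < f \<omega>} \<le> emeasure M {\<omega>\<in>space M. f \<omega> \<ge> a}"
    by (intro emeasure_mono) auto
  also have "\<dots> \<le> ennreal (exp (- s * a)) * nn_integral M (\<lambda>\<omega>. ennreal (exp (s * f \<omega>)) * indicator (space M) \<omega>)"
    by (rule Chernoff_ineq_nn_integral_ge) (use s in auto)
  also have "nn_integral M (\<lambda>\<omega>. ennreal (exp (s * f \<omega>)) * indicator (space M) \<omega>)
       = nn_integral M (\<lambda>\<omega>. ennreal (exp (s * f \<omega>)))"
    by (intro nn_integral_cong) simp
  also have "\<dots> = ennreal ((1 / sqrt (1 - 2 * s)) ^ card B)"
    unfolding f_def by (rule mgf_proj[OF B s])
  also have "ennreal (exp (- s * a)) * \<dots> = ennreal (exp (- s * a) * (1 / sqrt (1 - 2 * s)) ^ card B)"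
    using s by (simp add: ennreal_mult)
  also have "ennreal (exp (- s * a) * (1 / sqrt (1 - 2 * s)) ^ card B) \<le> ennreal (exp (-L))"
  proof (rule ennreal_leI)
    have c: "1 - 2 * s > 0" using s by simp
    have l2: "ln (1 - 2 * s) / 2 = ln (sqrt (1 - 2 * s))" using c by (simp add: ln_sqrt)
    have "exp (- ln (1 - 2 * s) / 2) = exp (- (ln (1 - 2 * s) / 2))" by simp
    also have "\<dots> = 1 / sqrt (1 - 2 * s)" unfolding l2 exp_minus using c by (simp add: inverse_eq_divide)
    finally have "1 / sqrt (1 - 2 * s) = exp (- ln (1 - 2 * s) / 2)" by simp
    hence "(1 / sqrt (1 - 2 * s)) ^ card B = exp (- ln (1 - 2 * s) / 2) ^ card B" by simp
    also have "\<dots> = exp (real (card B) * (- ln (1 - 2 * s) / 2))" by (rule exp_of_nat_mult[symmetric])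
    finally have pw: "(1 / sqrt (1 - 2 * s)) ^ card B = exp (r * (- ln (1 - 2 * s) / 2))"
      by (simp add: r_def)
    have "- ln (1 - 2 * s) \<le> 2 * s + (2 * s)^2 / (2 * (1 - 2 * s))"
      using ln_lower2[of "2 * s"] s by simp
    moreover have "(2 * s)^2 / (2 * (1 - 2 * s)) = 2 * (s^2 / (1 - 2 * s))"
      using c by (simp add: field_simps power2_eq_square)
    ultimately have "- ln (1 - 2 * s) / 2 \<le> s + s^2 / (1 - 2 * s)" by linarith
    hence "r * (- ln (1 - 2 * s) / 2) \<le> r * (s + s^2 / (1 - 2 * s))"
      using r unfolding r_def[symmetric] by (intro mult_left_mono) auto
    hence "r * (- ln (1 - 2 * s) / 2) \<le> r * s + r * s^2 / (1 - 2 * s)"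
      by (simp add: distrib_left)
    with pw have "exp (- s * a) * (1 / sqrt (1 - 2 * s)) ^ card B \<le> exp (- s * a + (r * s + r * s^2 / (1 - 2 * s)))"
      by (simp add: exp_add[symmetric])
    also have "- s * a + (r * s + r * s^2 / (1 - 2 * s)) = - L" using alg unfolding a_def by simp
    finally show "exp (- s * a) * (1 / sqrt (1 - 2 * s)) ^ card B \<le> exp (-L)" .
  qed
  finally show ?thesis unfolding f_def a_def r_def by (simp add: emeasure_eq_measure)
qed

end


lemma restr_diff: "restr G (a - b) = restr G a - restr G b"
  by (simp add: restr_def vec_eq_iff)
lemma restr_scale: "restr G (c *\<^sub>R a) = c *\<^sub>R restr G a"
  by (simp add: restr_def vec_eq_iff)
lemma Xg_diff: "Xg X G (a - b) = Xg X G a - Xg X G b"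
  by (simp add: Xg_def restr_diff matrix_vector_mult_diff_distrib)
lemma Xg_scale: "Xg X G (c *\<^sub>R a) = c *\<^sub>R Xg X G a"
  by (simp add: Xg_def restr_scale matrix_vector_mult_scaleR)
lemma linear_restr: "linear (restr G)"
  by (rule linearI) (simp_all add: restr_def vec_eq_iff)
lemma linear_Xg: "linear (Xg X G)"
proof -
  have "linear ((\<lambda>x. X *v x) \<circ> restr G)"
    by (rule linear_compose[OF linear_restr matrix_vector_mul_linear])
  thus ?thesis by (simp add: o_def Xg_def[abs_def])
qed

lemma subspace_colspace: "subspace (colspace X G)"
  unfolding colspace_def by (rule linear_subspace_image[OF linear_Xg subspace_UNIV])

lemma proj_basis:
  fixes X :: "real^'p::finite^'T::finite"
  shows "\<exists>B. finite B \<and> pairwise orthogonal B \<and> (\<forall>b\<in>B. norm b = 1) \<and> card B = grank X G \<and>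
     (\<forall>w. (norm (Proj X G w))^2 = (\<Sum>b\<in>B. (b \<bullet> w)^2)) \<and>
     (\<forall>w y. y \<in> colspace X G \<longrightarrow> \<bar>y \<bullet> w\<bar> \<le> norm y * norm (Proj X G w))"
proof -
  let ?S = "colspace X G"
  have S: "subspace ?S" by (rule subspace_colspace)
  obtain B where B: "B \<subseteq> ?S" "pairwise orthogonal B" "\<And>x. x \<in> B \<Longrightarrow> norm x = 1"
      "independent B" "card B = dim ?S" "span B = ?S"
    by (rule orthonormal_basis_subspace[OF S]) blast
  have fB: "finite B" using B(4) by (rule finiteI_independent)
  have bb: "b \<bullet> b' = (if b = b' then 1 else 0)" if "b \<in> B" "b' \<in> B" for b b'
  proof (cases "b = b'")
    case True thus ?thesis using B(3)[OF that(1)] by (simp add: dot_square_norm)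
  next
    case False thus ?thesis using B(2) that unfolding pairwise_def orthogonal_def by auto
  qed
  define P where "P = (\<lambda>w. \<Sum>b\<in>B. (b \<bullet> w) *\<^sub>R b)"
  have PS: "P w \<in> ?S" for w
    unfolding P_def B(6)[symmetric] by (intro span_sum span_scale span_base) 
  have orth: "orthogonal (w - P w) y" if "y \<in> ?S" for w y
  proof (rule orthogonal_to_span[of y B "w - P w"])
    show "y \<in> span B" using that B(6) by simp
  next
    fix b assume b: "b \<in> B"
    have "b \<bullet> P w = (\<Sum>b'\<in>B. (b' \<bullet> w) * (b \<bullet> b'))"
      unfolding P_def by (simp add: inner_sum_right)
    also have "\<dots> = (\<Sum>b'\<in>B. if b = b' then b' \<bullet> w else 0)"
      by (intro sum.cong refl) (simp add: bb b)
    also have "\<dots> = b \<bullet> w" using b fB by (simp add: sum.delta)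
    finally show "orthogonal (w - P w) b" by (simp add: orthogonal_def inner_diff_left inner_diff_right inner_commute)
  qed
  have Pc: "P w = Proj X G w" for w
    unfolding Proj_def
  proof (rule closest_point_unique)
    show "convex ?S" by (rule subspace_imp_convex[OF S])
    show "closed ?S" by (rule closed_subspace[OF S])
    show "P w \<in> ?S" by (rule PS)
    show "\<forall>z\<in>?S. dist w (P w) \<le> dist w z"
    proof
      fix z assume z: "z \<in> ?S"
      have "P w - z \<in> ?S" using PS z S by (simp add: subspace_diff)
      hence o: "(w - P w) \<bullet> (P w - z) = 0" using orth unfolding orthogonal_def by blast
      have "(dist w z)^2 = (norm ((w - P w) + (P w - z)))^2" by (simp add: dist_norm)
      also have "\<dots> = (norm (w - P w))^2 + (norm (P w - z))^2"
        using norm_add_Pythagorean[of "w - P w" "P w - z"] o by (simp add: orthogonal_def)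
      finally have "(dist w (P w))^2 \<le> (dist w z)^2" by (simp add: dist_norm)
      thus "dist w (P w) \<le> dist w z" by (simp add: power2_le_iff_abs_le)
    qed
  qed
  have nP: "(norm (Proj X G w))^2 = (\<Sum>b\<in>B. (b \<bullet> w)^2)" for w
  proof -
    have "(norm (P w))^2 = (\<Sum>b\<in>B. (norm ((b \<bullet> w) *\<^sub>R b))^2)"
      unfolding P_def
    proof (rule norm_sum_Pythagorean[OF fB])
      show "pairwise (\<lambda>i j. orthogonal ((i \<bullet> w) *\<^sub>R i) ((j \<bullet> w) *\<^sub>R j)) B"
        using B(2) unfolding pairwise_def by (auto simp: orthogonal_clauses)
    qed
    also have "\<dots> = (\<Sum>b\<in>B. (b \<bullet> w)^2)" using B(3) by (intro sum.cong) (auto simp: power_mult_distrib)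
    finally show ?thesis using Pc by simp
  qed
  have ip: "\<bar>y \<bullet> w\<bar> \<le> norm y * norm (Proj X G w)" if "y \<in> ?S" for w y
  proof -
    have "y \<bullet> w = y \<bullet> P w + (w - P w) \<bullet> y" by (simp add: inner_diff_left inner_diff_right inner_commute)
    also have "(w - P w) \<bullet> y = 0" using orth[OF that] by (simp add: orthogonal_def)
    finally have "y \<bullet> w = y \<bullet> P w" by simp
    thus ?thesis using Cauchy_Schwarz_ineq2[of y "P w"] Pc by simp
  qed
  show ?thesis
    using fB B(2,3) B(5) nP ip unfolding grank_def by blast
qed


lemma dmul_diff: "dmul y (a - b) = dmul y a - dmul y b"
  by (simp add: dmul_def vec_eq_iff algebra_simps)

lemma sum_restr_partition:
  fixes G :: "'k::finite \<Rightarrow> 'p::finite set"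
  assumes "\<forall>k k'. k \<noteq> k' \<longrightarrow> G k \<inter> G k' = {}" "(\<Union>k. G k) = UNIV"
  shows "(\<Sum>k\<in>UNIV. restr (G k) d) = d"
proof (subst vec_eq_iff, intro allI)
  fix j
  obtain k0 where k0: "j \<in> G k0" using assms(2) by blast
  have "(\<Sum>k\<in>UNIV. restr (G k) d) $ j = (\<Sum>k\<in>UNIV. if k = k0 then d $ j else 0)"
    unfolding sum_component restr_def
    using assms(1) k0 by (intro sum.cong refl) auto
  also have "\<dots> = d $ j" by simp
  finally show "(\<Sum>k\<in>UNIV. restr (G k) d) $ j = d $ j" .
qed

lemma Xsum: 
  fixes G :: "'k::finite \<Rightarrow> 'p::finite set"
  assumes "\<forall>k k'. k \<noteq> k' \<longrightarrow> G k \<inter> G k' = {}" "(\<Union>k. G k) = UNIV"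
  shows "X *v d = (\<Sum>k\<in>UNIV. Xg X (G k) d)"
proof -
  have "X *v d = X *v (\<Sum>k\<in>UNIV. restr (G k) d)" using sum_restr_partition[OF assms] by simp
  also have "\<dots> = (\<Sum>k\<in>UNIV. X *v restr (G k) d)"
    by (rule linear_sum[OF matrix_vector_mul_linear])
  finally show ?thesis by (simp add: Xg_def)
qed

lemma det_main:
  fixes X :: "real^'p::finite^'T::finite" and R :: "real^'q::finite^'T" and G :: "'k::finite \<Rightarrow> 'p set"
  assumes part: "\<forall>k k'. k \<noteq> k' \<longrightarrow> G k \<inter> G k' = {}" "(\<Union>k. G k) = UNIV"
    and lam0: "\<forall>k. lam k \<ge> 0"
    and ip: "\<forall>k w y. y \<in> colspace X (G k) \<longrightarrow> \<bar>y \<bullet> w\<bar> \<le> norm y * norm (Proj X (G k) w)"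
    and gre: "GRE X G lam N \<kappa>" and \<kappa>: "\<kappa> > 0" and Ks: "card Ks \<le> N"
    and supp: "\<forall>k. k \<notin> Ks \<longrightarrow> Xg X (G k) \<phi>t = 0"
    and feas: "schd_feasible X R G lam Y \<phi>t \<alpha>t vt"
    and mini: "schd_min X R G lam Y \<phi>h \<alpha>h vh"
  shows "norm (X *v (\<phi>h - \<phi>t)) \<le> norm (dmul Y (R *v (\<alpha>h - \<alpha>t))) + 4 * sqrt (\<Sum>k\<in>Ks. (lam k)^2) / \<kappa>"
proof -
  define \<Delta> where "\<Delta> = \<phi>h - \<phi>t"
  define n where "n = (\<lambda>k. norm (Xg X (G k) \<Delta>))"
  define u where "u = dmul Y (R *v (\<alpha>h - \<alpha>t))"
  define \<rho>h where "\<rho>h = dmul Y (R *v \<alpha>h) - X *v \<phi>h"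
  define \<rho>t where "\<rho>t = dmul Y (R *v \<alpha>t) - X *v \<phi>t"
  have feh: "schd_feasible X R G lam Y \<phi>h \<alpha>h vh" using mini by (simp add: schd_min_def)
  have obj: "(\<Sum>k\<in>UNIV. lam k * norm (Xg X (G k) \<phi>h)) \<le> (\<Sum>k\<in>UNIV. lam k * norm (Xg X (G k) \<phi>t))"
    using mini feas unfolding schd_min_def schd_obj_def by blast
  have Ph: "norm (Proj X (G k) \<rho>h) \<le> lam k" for k using feh unfolding schd_feasible_def \<rho>h_def by blast
  have Pt: "norm (Proj X (G k) \<rho>t) \<le> lam k" for k using feas unfolding schd_feasible_def \<rho>t_def by blast
  have XgD: "Xg X (G k) \<Delta> = Xg X (G k) \<phi>h - Xg X (G k) \<phi>t" for k by (simp add: \<Delta>_def Xg_diff)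
  have UN: "UNIV = Ks \<union> -Ks" by auto
  have split: "(\<Sum>k\<in>UNIV. f k) = (\<Sum>k\<in>Ks. f k) + (\<Sum>k\<in>-Ks. f k)" for f :: "'k \<Rightarrow> real"
    by (subst UN) (rule sum.union_disjoint, auto)
  have cone: "(\<Sum>k\<in>-Ks. lam k * n k) \<le> (\<Sum>k\<in>Ks. lam k * n k)"
  proof -
    have out: "lam k * norm (Xg X (G k) \<phi>h) = lam k * n k" if "k \<in> -Ks" for k
      using supp that by (simp add: n_def XgD)
    have ot: "lam k * norm (Xg X (G k) \<phi>t) = 0" if "k \<in> -Ks" for k
      using supp that by simp
    have inn: "lam k * norm (Xg X (G k) \<phi>t) - lam k * n k \<le> lam k * norm (Xg X (G k) \<phi>h)" for k
    proof -
      have "norm (Xg X (G k) \<phi>t) \<le> norm (Xg X (G k) \<phi>h) + n k"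
        unfolding n_def XgD by (metis add.commute diff_add_cancel norm_triangle_ineq4 norm_minus_commute add_diff_cancel_right')
      thus ?thesis using lam0 by (simp add: algebra_simps) (metis distrib_left mult_left_mono)
    qed
    have "(\<Sum>k\<in>-Ks. lam k * n k) + (\<Sum>k\<in>Ks. lam k * norm (Xg X (G k) \<phi>t) - lam k * n k)
        \<le> (\<Sum>k\<in>-Ks. lam k * norm (Xg X (G k) \<phi>h)) + (\<Sum>k\<in>Ks. lam k * norm (Xg X (G k) \<phi>h))"
      by (intro add_mono sum_mono) (metis out order_refl, rule inn)
    also have "\<dots> = (\<Sum>k\<in>UNIV. lam k * norm (Xg X (G k) \<phi>h))" by (simp add: split)
    also have "\<dots> \<le> (\<Sum>k\<in>UNIV. lam k * norm (Xg X (G k) \<phi>t))" by (rule obj)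
    also have "\<dots> = (\<Sum>k\<in>Ks. lam k * norm (Xg X (G k) \<phi>t))"
    proof -
      have z: "(\<Sum>k\<in>-Ks. lam k * norm (Xg X (G k) \<phi>t)) = 0" by (rule sum.neutral) (use ot in blast)
      show ?thesis by (subst split) (simp only: z add_0_right)
    qed
    finally show ?thesis by (simp add: sum_subtractf)
  qed
  have re: "\<kappa>^2 * (\<Sum>k\<in>Ks. (n k)^2) \<le> (norm (X *v \<Delta>))^2"
    using gre Ks cone unfolding GRE_def n_def by blast
  have XD: "X *v \<Delta> = u - \<rho>h + \<rho>t"
    unfolding u_def \<rho>h_def \<rho>t_def \<Delta>_def
    by (simp add: matrix_vector_mult_diff_distrib dmul_diff)
  have bnd: "(Xg X (G k) \<Delta>) \<bullet> (\<rho>t - \<rho>h) \<le> 2 * (lam k * n k)" for k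
  proof -
    have y: "Xg X (G k) \<Delta> \<in> colspace X (G k)" by (simp add: colspace_def)
    have "(Xg X (G k) \<Delta>) \<bullet> \<rho>t \<le> n k * lam k"
      using ip[rule_format, OF y, of \<rho>t] Pt[of k] unfolding n_def
      by (smt (verit) mult_left_mono norm_ge_zero)
    moreover have "- ((Xg X (G k) \<Delta>) \<bullet> \<rho>h) \<le> n k * lam k"
      using ip[rule_format, OF y, of \<rho>h] Ph[of k] unfolding n_def
      by (smt (verit) mult_left_mono norm_ge_zero)
    ultimately show ?thesis by (simp add: inner_diff_right algebra_simps)
  qed
  define NN where "NN = norm (X *v \<Delta>)"
  have "NN^2 = (X *v \<Delta>) \<bullet> u + (X *v \<Delta>) \<bullet> (\<rho>t - \<rho>h)"
    unfolding NN_def power2_norm_eq_inner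
    by (subst (2) XD) (simp add: inner_diff_right inner_add_right algebra_simps)
  also have "(X *v \<Delta>) \<bullet> (\<rho>t - \<rho>h) = (\<Sum>k\<in>UNIV. (Xg X (G k) \<Delta>) \<bullet> (\<rho>t - \<rho>h))"
    by (simp add: Xsum[OF part] inner_sum_left)
  also have "\<dots> \<le> (\<Sum>k\<in>UNIV. 2 * (lam k * n k))" by (intro sum_mono bnd)
  also have "\<dots> = 2 * ((\<Sum>k\<in>Ks. lam k * n k) + (\<Sum>k\<in>-Ks. lam k * n k))"
    by (simp add: sum_distrib_left[symmetric] split)
  also have "\<dots> \<le> 4 * (\<Sum>k\<in>Ks. lam k * n k)" using cone by simp
  finally have b1: "NN^2 \<le> (X *v \<Delta>) \<bullet> u + 4 * (\<Sum>k\<in>Ks. lam k * n k)" by simp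
  have cs: "(\<Sum>k\<in>Ks. lam k * n k) \<le> sqrt (\<Sum>k\<in>Ks. (lam k)^2) * sqrt (\<Sum>k\<in>Ks. (n k)^2)"
  proof -
    have "(\<Sum>k\<in>Ks. lam k * n k) = (\<Sum>k\<in>Ks. \<bar>lam k\<bar> * \<bar>n k\<bar>)"
      using lam0 by (simp add: n_def)
    also have "\<dots> \<le> L2_set lam Ks * L2_set n Ks" by (rule L2_set_mult_ineq)
    finally show ?thesis by (simp add: L2_set_def)
  qed
  have sn: "sqrt (\<Sum>k\<in>Ks. (n k)^2) \<le> NN / \<kappa>"
  proof -
    have "sqrt (\<kappa>^2 * (\<Sum>k\<in>Ks. (n k)^2)) \<le> sqrt (NN^2)" using re unfolding NN_def by (rule real_sqrt_le_mono)
    hence "\<kappa> * sqrt (\<Sum>k\<in>Ks. (n k)^2) \<le> NN" using \<kappa> by (simp add: real_sqrt_mult NN_def)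
    thus ?thesis using \<kappa> by (simp add: field_simps)
  qed
  define S where "S = sqrt (\<Sum>k\<in>Ks. (lam k)^2)"
  have S0: "S \<ge> 0" unfolding S_def by (simp add: sum_nonneg)
  have "(X *v \<Delta>) \<bullet> u \<le> NN * norm u" unfolding NN_def by (rule norm_cauchy_schwarz)
  moreover have "4 * (\<Sum>k\<in>Ks. lam k * n k) \<le> 4 * (S * (NN / \<kappa>))"
    using cs sn S0 unfolding S_def[symmetric] by (smt (verit) mult_left_mono)
  ultimately have "NN^2 \<le> NN * (norm u + 4 * S / \<kappa>)" using b1 by (simp add: algebra_simps)
  hence "NN \<le> norm u + 4 * S / \<kappa>"
  proof (cases "NN = 0")
    case True thus ?thesis using S0 \<kappa> by simp
  next
    case False
    hence "NN > 0" unfolding NN_def by simp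
    thus ?thesis using \<open>NN^2 \<le> NN * (norm u + 4 * S / \<kappa>)\<close>
      by (simp add: power2_eq_square)
  qed
  thus ?thesis unfolding NN_def u_def S_def \<Delta>_def .
qed


lemma alg_b:
  fixes T x C1 C2 C3 A D :: real
  assumes T: "T > 0" and x: "x > 0" and C2: "C2 > 0" and C1: "C1 \<ge> 0" and C3: "C3 > 0"
    and D: "D = (sqrt C2 + sqrt (2 * C1)) / C3 * sqrt (8 / T * x)" and D1: "D \<le> 1"
    and A: "A \<ge> T * C3"
  shows "A * (1 - 1/(1+D)^2) > 0" "x \<le> (A * (1 - 1/(1+D)^2))^2 / (4 * (T * (C2 + C1/2)))"
proof -
  define c where "c = sqrt C2 + sqrt (2 * C1)"
  have c: "c > 0" using C2 C1 by (simp add: c_def add_pos_nonneg)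
  have D0: "D > 0" using c C3 T x unfolding D c_def[symmetric] by simp
  have DD: "D^2 = c^2 / C3^2 * (8 / T * x)"
    using T x unfolding D c_def[symmetric] by (simp add: power_mult_distrib power_divide)
  have f: "1 - 1/(1+D)^2 \<ge> 3/4 * D"
  proof -
    have p: "(1+D)^2 > 0" using D0 by simp
    have "3/4 * D * (1+D)^2 \<le> (1+D)^2 - 1"
    proof -
      have e: "(1+D)^2 - 1 - 3/4 * D * (1+D)^2 = D * (5/4 - D/2 - 3/4 * D^2)"
        by (simp add: power2_eq_square algebra_simps)
      have "D^2 \<le> 1" using D0 D1 by (simp add: power_le_one)
      hence "5/4 - D/2 - 3/4 * D^2 \<ge> 0" using D1 by simp
      hence "D * (5/4 - D/2 - 3/4 * D^2) \<ge> 0" using D0 by simp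
      thus ?thesis using e by linarith
    qed
    hence "3/4 * D \<le> ((1+D)^2 - 1) / (1+D)^2" using p by (simp add: pos_le_divide_eq)
    also have "\<dots> = 1 - 1/(1+D)^2" using p by (simp add: diff_divide_distrib)
    finally show ?thesis .
  qed
  have u: "A * (1 - 1/(1+D)^2) \<ge> T * C3 * (3/4 * D)"
  proof -
    have "T * C3 * (3/4 * D) \<le> A * (3/4 * D)" using A D0 by (intro mult_right_mono) auto
    also have "\<dots> \<le> A * (1 - 1/(1+D)^2)"
      using f A T C3 by (intro mult_left_mono) (auto intro: order_trans[OF less_imp_le[OF mult_pos_pos[OF T C3]]])
    finally show ?thesis .
  qed
  have up: "T * C3 * (3/4 * D) > 0" using T C3 D0 by simp
  show "A * (1 - 1/(1+D)^2) > 0" using u up by linarith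
  have h1: "(T * C3 * (3/4 * D))^2 \<le> (A * (1 - 1/(1+D)^2))^2"
    using u up by (intro power_mono) auto
  have h2: "(T * C3 * (3/4 * D))^2 = 9/2 * T * x * c^2"
  proof -
    have "(T * C3 * (3/4 * D))^2 = (T^2 * C3^2 * (9/16)) * D^2" by (simp add: power2_eq_square)
    also have "\<dots> = (T^2 * C3^2 * (9/16)) * (c^2 / C3^2 * (8 / T * x))" by (simp only: DD)
    also have "\<dots> = 9/2 * T * x * c^2" using C3 T by (simp add: power2_eq_square)
    finally show ?thesis .
  qed
  have h3: "c^2 \<ge> C2 + 2 * C1"
    using C2 C1 unfolding c_def by (simp add: power2_eq_square algebra_simps real_sqrt_mult_self mult_nonneg_nonneg)
  have "9/2 * T * x * (C2 + 2 * C1) \<le> 9/2 * T * x * c^2"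
    using h3 T x by (intro mult_left_mono) auto
  hence h4: "9/2 * T * x * (C2 + 2 * C1) \<le> (A * (1 - 1/(1+D)^2))^2" using h1 h2 by linarith
  have "x * (4 * (T * (C2 + C1/2))) \<le> 9/2 * T * x * (C2 + 2 * C1)"
  proof -
    have "9/2 * T * x * (C2 + 2 * C1) - x * (4 * (T * (C2 + C1/2))) = T * x * (C2/2 + 7 * C1)"
      by (simp add: algebra_simps)
    moreover have "T * x * (C2/2 + 7 * C1) \<ge> 0" using T x C1 C2 by simp
    ultimately show ?thesis by linarith
  qed
  hence "x * (4 * (T * (C2 + C1/2))) \<le> (A * (1 - 1/(1+D)^2))^2" using h4 by linarith
  thus "x \<le> (A * (1 - 1/(1+D)^2))^2 / (4 * (T * (C2 + C1/2)))"
    using T C1 C2 by (simp add: pos_le_divide_eq)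
qed


lemma transpose_mv: "(transpose R *v v) $ l = (\<Sum>t\<in>UNIV. R $ t $ l * v $ t)"
  by (simp add: matrix_vector_mult_def transpose_def)

lemma dmul_scale: "dmul y (c *\<^sub>R v) = c *\<^sub>R dmul y v"
  by (simp add: dmul_def vec_eq_iff)

lemma lam_sq_bound:
  fixes r L :: real assumes "r \<ge> 0" "L \<ge> 0"
  shows "(2 * sqrt (r + 2 * sqrt (r * L) + 2 * L))^2 \<le> 4 * (2 * r + 3 * L)"
proof -
  have "2 * sqrt (r * L) \<le> r + L"
  proof -
    have "0 \<le> (sqrt r - sqrt L)^2" by simp
    thus ?thesis using assms by (simp add: power2_eq_square algebra_simps real_sqrt_mult real_sqrt_mult_self)
  qed
  moreover have "(2 * sqrt (r + 2 * sqrt (r * L) + 2 * L))^2 = 4 * (r + 2 * sqrt (r * L) + 2 * L)"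
    using assms by (simp add: power_mult_distrib)
  ultimately show ?thesis by simp
qed

lemma Max_range_ge: fixes f :: "'a::finite \<Rightarrow> real" shows "f l \<le> Max (range f)"
  by (rule Max_ge) auto
lemma Min_range_le: fixes f :: "'a::finite \<Rightarrow> real" shows "Min (range f) \<le> f l"
  by (rule Min_le) auto


theorem theorem2:
  fixes X :: "real^'p::finite^'T::finite" and R :: "real^'q::finite^'T"
    and G :: "'k::finite \<Rightarrow> 'p set"
    and \<phi>s :: "real^'p" and \<alpha>s :: "real^'q"
    and M :: "'a measure" and \<xi> :: "'a \<Rightarrow> real^'T" and Y :: "'a \<Rightarrow> real^'T"
    and \<epsilon> \<kappa> :: real and lam :: "'k \<Rightarrow> real"
  assumes R_nonneg: "\<forall>t l. R $ t $ l \<ge> 0"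
    and partition: "\<forall>k. G k \<noteq> {}" "\<forall>k k'. k \<noteq> k' \<longrightarrow> G k \<inter> G k' = {}"
      "(\<Union>k. G k) = UNIV"
    and Ralpha_pos: "\<forall>t. (R *v \<alpha>s) $ t > 0"
    and prob: "prob_space M"
    and noise_indep: "prob_space.indep_vars M (\<lambda>_. borel) (\<lambda>t \<omega>. \<xi> \<omega> $ t) UNIV"
    and noise_normal: "\<forall>t. distributed M lborel (\<lambda>\<omega>. \<xi> \<omega> $ t) (\<lambda>x. ennreal (std_normal_density x))"
    and model: "\<forall>\<omega>\<in>space M. dmul (Y \<omega>) (R *v \<alpha>s) = X *v \<phi>s + \<xi> \<omega>"
    and eps: "0 < \<epsilon>" "\<epsilon> < 1"
    and lam_def: "\<forall>k. lam k = 2 * sqrt (real (grank X (G k))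
        + 2 * sqrt (real (grank X (G k)) * ln (real CARD('k) / \<epsilon>))
        + 2 * ln (real CARD('k) / \<epsilon>))"
    and kappa: "\<kappa> > 0"
    and gre: "GRE X G lam (card (Kstar G \<phi>s)) \<kappa>"
    and C3_pos: "C3 R \<alpha>s > 0"
    and T_large: "real CARD('T) \<ge> 8 * (C4 X R \<phi>s \<alpha>s)^2 * ln (2 * real CARD('q) / \<epsilon>)"
  shows "\<exists>A\<in>sets M. measure M A \<ge> 1 - 2 * \<epsilon> \<and>
    (\<forall>\<omega>\<in>A. \<forall>\<phi>h \<alpha>h vh. schd_min X R G lam (Y \<omega>) \<phi>h \<alpha>h vh \<longrightarrow>
       norm (X *v (\<phi>h - \<phi>s)) \<le>
         C4 X R \<phi>s \<alpha>s * sqrt ((8 / real CARD('T)) * ln (2 * real CARD('q) / \<epsilon>))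
             * (2 * norm (X *v \<phi>s) + norm (\<xi> \<omega>))
         + (8 / \<kappa>) * sqrt (2 * real (sstar X G \<phi>s) + 3 * real (card (Kstar G \<phi>s)) * ln (real CARD('k) / \<epsilon>))
         + norm (dmul (Y \<omega>) (R *v (\<alpha>h - \<alpha>s))))"
  proof -
  interpret gnoise M \<xi>
    using prob noise_indep noise_normal by (simp add: gnoise_def gnoise_axioms_def)
  define x where "x = ln (2 * real CARD('q) / \<epsilon>)"
  define L where "L = ln (real CARD('k) / \<epsilon>)"
  define D where "D = C4 X R \<phi>s \<alpha>s * sqrt ((8 / real CARD('T)) * ln (2 * real CARD('q) / \<epsilon>))"
  define \<rho> where "\<rho> = (\<lambda>t. (R *v \<alpha>s) $ t)"
  define m where "m = (\<lambda>t. (X *v \<phi>s) $ t)"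
  define w where "w = (\<lambda>l t. R $ t $ l / \<rho> t)"
  define f1 where "f1 = (\<lambda>l. (1 / real CARD('T)) * (\<Sum>t\<in>UNIV. (R $ t $ l)^2 * ((X *v \<phi>s) $ t)^2 / ((R *v \<alpha>s) $ t)^2))"
  define f2 where "f2 = (\<lambda>l. (1 / real CARD('T)) * (\<Sum>t\<in>UNIV. (R $ t $ l)^2 / ((R *v \<alpha>s) $ t)^2))"
  define f3 where "f3 = (\<lambda>l. (1 / real CARD('T)) * (\<Sum>t\<in>UNIV. R $ t $ l / (R *v \<alpha>s) $ t))"
  have T0: "real CARD('T) > 0" by simp
  have \<rho>0: "\<And>t. \<rho> t > 0" using Ralpha_pos by (simp add: \<rho>_def)
  have x0: "x > 0"
  proof -
    have q1: "CARD('q) \<ge> 1" using zero_less_card_finite[where 'a='q] by linarith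
    hence "2 * real CARD('q) \<ge> 2" by simp
    hence e2: "\<epsilon> < 2 * real CARD('q)" using eps by linarith
    have "2 * real CARD('q) / \<epsilon> > 1" using eps e2 by (simp add: less_divide_eq)
    thus ?thesis by (simp add: x_def)
  qed
  have L0: "L > 0"
  proof -
    have k1: "CARD('k) \<ge> 1" using zero_less_card_finite[where 'a='k] by linarith
    hence "real CARD('k) \<ge> 1" by simp
    hence e2: "\<epsilon> < real CARD('k)" using eps by linarith
    have "real CARD('k) / \<epsilon> > 1" using eps e2 by (simp add: less_divide_eq)
    thus ?thesis by (simp add: L_def)
  qed
  have C1e: "C1 X R \<phi>s \<alpha>s = Max (range f1)" by (simp add: C1_def f1_def)
  have C2e: "C2 R \<alpha>s = Max (range f2)" by (simp add: C2_def f2_def)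
  have C3e: "C3 R \<alpha>s = Min (range f3)" by (simp add: C3_def f3_def)
  have f1C: "f1 l \<le> C1 X R \<phi>s \<alpha>s" for l unfolding C1e by (rule Max_range_ge)
  have f2C: "f2 l \<le> C2 R \<alpha>s" for l unfolding C2e by (rule Max_range_ge)
  have f3C: "C3 R \<alpha>s \<le> f3 l" for l unfolding C3e by (rule Min_range_le)
  have f1p: "f1 l \<ge> 0" for l unfolding f1_def by (intro mult_nonneg_nonneg sum_nonneg) auto
  have C1p: "C1 X R \<phi>s \<alpha>s \<ge> 0" using f1p f1C by (meson order_trans)
  have C2p: "C2 R \<alpha>s > 0"
  proof -
    obtain l0 :: 'q where True by simp
    have "f3 l0 > 0" using f3C[of l0] C3_pos by simp
    hence "(\<Sum>t\<in>UNIV. R $ t $ l0 / (R *v \<alpha>s) $ t) > 0" unfolding f3_def using T0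
      by (simp add: zero_less_divide_iff)
    then obtain t0 where "R $ t0 $ l0 / (R *v \<alpha>s) $ t0 \<noteq> 0"
      by (metis (no_types, lifting) less_irrefl sum.neutral)
    hence "(R $ t0 $ l0)^2 / ((R *v \<alpha>s) $ t0)^2 > 0" by (simp add: power_divide[symmetric])
    hence "(\<Sum>t\<in>UNIV. (R $ t $ l0)^2 / ((R *v \<alpha>s) $ t)^2) > 0"
      by (intro sum_pos2[of UNIV t0]) auto
    hence "f2 l0 > 0" unfolding f2_def using T0 by simp
    thus ?thesis using f2C[of l0] by simp
  qed
  have C4e: "C4 X R \<phi>s \<alpha>s = (sqrt (C2 R \<alpha>s) + sqrt (2 * C1 X R \<phi>s \<alpha>s)) / C3 R \<alpha>s" by (simp add: C4_def)
  have C4p: "C4 X R \<phi>s \<alpha>s \<ge> 0" unfolding C4e using C3_pos C1p C2p by simp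
  have D0: "D \<ge> 0" unfolding D_def using C4p x0 by (simp add: x_def[symmetric])
  have D1: "D \<le> 1"
  proof -
    have "D^2 = (C4 X R \<phi>s \<alpha>s)^2 * (8 / real CARD('T) * x)"
      unfolding D_def x_def[symmetric] using x0 by (simp add: power_mult_distrib)
    also have "\<dots> = 8 * (C4 X R \<phi>s \<alpha>s)^2 * x / real CARD('T)" by simp
    also have "\<dots> \<le> 1" using T_large T0 unfolding x_def[symmetric] by (simp add: divide_le_eq)
    finally show ?thesis using power2_le_imp_le[of D 1] by simp
  qed
  have "\<forall>k. \<exists>B. finite B \<and> pairwise orthogonal B \<and> (\<forall>b\<in>B. norm b = 1) \<and> card B = grank X (G k) \<and>
     (\<forall>w. (norm (Proj X (G k) w))^2 = (\<Sum>b\<in>B. (b \<bullet> w)^2)) \<and>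
     (\<forall>w y. y \<in> colspace X (G k) \<longrightarrow> \<bar>y \<bullet> w\<bar> \<le> norm y * norm (Proj X (G k) w))"
    using proj_basis by blast
  then obtain B where B: "\<And>k. finite (B k) \<and> pairwise orthogonal (B k) \<and> (\<forall>b\<in>B k. norm b = 1) \<and> card (B k) = grank X (G k) \<and>
     (\<forall>w. (norm (Proj X (G k) w))^2 = (\<Sum>b\<in>B k. (b \<bullet> w)^2)) \<and>
     (\<forall>w y. y \<in> colspace X (G k) \<longrightarrow> \<bar>y \<bullet> w\<bar> \<le> norm y * norm (Proj X (G k) w))"
    by metis
  have Bfin: "finite (B k)" for k using B[of k] by (rule conjunct1)
  have Bpw: "pairwise orthogonal (B k)" for k using B[of k, THEN conjunct2] by (rule conjunct1)
  have Bn1: "\<forall>b\<in>B k. norm b = 1" for k using B[of k, THEN conjunct2, THEN conjunct2] by (rule conjunct1)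
  have Bcard: "card (B k) = grank X (G k)" for k using B[of k, THEN conjunct2, THEN conjunct2, THEN conjunct2] by (rule conjunct1)
  have BnP: "\<forall>w. (norm (Proj X (G k) w))^2 = (\<Sum>b\<in>B k. (b \<bullet> w)^2)" for k
    using B[of k, THEN conjunct2, THEN conjunct2, THEN conjunct2, THEN conjunct2] by (rule conjunct1)
  have Bip: "\<forall>w y. y \<in> colspace X (G k) \<longrightarrow> \<bar>y \<bullet> w\<bar> \<le> norm y * norm (Proj X (G k) w)" for k
    using B[of k, THEN conjunct2, THEN conjunct2, THEN conjunct2, THEN conjunct2] by (rule conjunct2)
  define Ea where "Ea = (\<lambda>k. {\<omega>\<in>space M. real (card (B k)) + 2 * sqrt (real (card (B k)) * L) + 2 * L
                < (\<Sum>b\<in>B k. (\<Sum>t\<in>UNIV. b $ t * \<xi> \<omega> $ t)^2)})"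
  define u where "u = (\<lambda>l. (\<Sum>t\<in>UNIV. w l t) * (1 - 1/(1+D)^2))"
  define Eb where "Eb = (\<lambda>l. {\<omega>\<in>space M. (\<Sum>t\<in>UNIV. w l t * ((\<xi> \<omega> $ t)^2 - 1 + m t * \<xi> \<omega> $ t)) \<le> - u l})"
  have Ea_m: "Ea k \<in> sets M" for k unfolding Ea_def by measurable
  have Eb_m: "Eb l \<in> sets M" for l unfolding Eb_def by measurable
  have Ea_p: "prob (Ea k) \<le> \<epsilon> / real CARD('k)" for k
  proof -
    have "prob (Ea k) \<le> exp (-L)" unfolding Ea_def
      by (rule tail_a[OF Bfin Bpw _ less_imp_le[OF L0]]) (use Bn1 in blast)
    also have "exp (-L) = \<epsilon> / real CARD('k)" unfolding L_def using eps
      by (simp add: exp_minus exp_ln inverse_eq_divide)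
    finally show ?thesis .
  qed
  have Eb_p: "prob (Eb l) \<le> \<epsilon> / real CARD('q)" for l
  proof -
    define V where "V = real CARD('T) * (C2 R \<alpha>s + C1 X R \<phi>s \<alpha>s / 2)"
    have A3: "(\<Sum>t\<in>UNIV. w l t) \<ge> real CARD('T) * C3 R \<alpha>s"
    proof -
      have "(\<Sum>t\<in>UNIV. w l t) = real CARD('T) * f3 l" unfolding f3_def w_def \<rho>_def using T0 by simp
      thus ?thesis using f3C[of l] T0 by simp
    qed
    have ab: "u l > 0" "x \<le> (u l)^2 / (4 * V)"
      using alg_b[OF T0 x0 C2p C1p C3_pos _ D1 A3] unfolding u_def V_def D_def C4e x_def by auto
    have VV: "(\<Sum>t\<in>UNIV. (w l t)^2 * (1 + (m t)^2/2)) \<le> V"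
    proof -
      have "(\<Sum>t\<in>UNIV. (w l t)^2 * (1 + (m t)^2/2))
          = (\<Sum>t\<in>UNIV. (R $ t $ l)^2 / ((R *v \<alpha>s) $ t)^2
              + ((R $ t $ l)^2 * ((X *v \<phi>s) $ t)^2 / ((R *v \<alpha>s) $ t)^2) / 2)"
        unfolding w_def m_def \<rho>_def by (intro sum.cong refl) (simp add: power_divide algebra_simps add_divide_distrib)
      also have "\<dots> = (\<Sum>t\<in>UNIV. (R $ t $ l)^2 / ((R *v \<alpha>s) $ t)^2)
              + (\<Sum>t\<in>UNIV. (R $ t $ l)^2 * ((X *v \<phi>s) $ t)^2 / ((R *v \<alpha>s) $ t)^2) / 2"
        by (simp add: sum.distrib sum_divide_distrib)
      also have "\<dots> = real CARD('T) * f2 l + real CARD('T) * f1 l / 2"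
        unfolding f1_def f2_def using T0 by simp
      also have "\<dots> \<le> V"
      proof -
        have "real CARD('T) * f2 l \<le> real CARD('T) * C2 R \<alpha>s" using f2C[of l] T0 by simp
        moreover have "real CARD('T) * f1 l \<le> real CARD('T) * C1 X R \<phi>s \<alpha>s" using f1C[of l] T0 by simp
        ultimately have "real CARD('T) * f2 l + real CARD('T) * f1 l / 2 \<le> real CARD('T) * C2 R \<alpha>s + real CARD('T) * C1 X R \<phi>s \<alpha>s / 2"
          by linarith
        moreover have "V = real CARD('T) * C2 R \<alpha>s + real CARD('T) * C1 X R \<phi>s \<alpha>s / 2"
          unfolding V_def by (simp add: algebra_simps)
        ultimately show ?thesis by simp
      qed
      finally show ?thesis .
    qed
    have V0: "V > 0" unfolding V_def using T0 C2p C1p by simp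
    have "prob (Eb l) \<le> exp (-x)" unfolding Eb_def
      by (rule tail_b[OF _ ab(1) VV V0 ab(2)]) (use Ralpha_pos R_nonneg in \<open>simp add: w_def \<rho>_def less_imp_le\<close>)
    also have "exp (-x) = \<epsilon> / (2 * real CARD('q))" unfolding x_def using eps
      by (simp add: exp_minus exp_ln inverse_eq_divide)
    also have "\<dots> \<le> \<epsilon> / real CARD('q)" using eps by (simp add: frac_le)
    finally show ?thesis .
  qed
  define F where "F = (\<Union>k. Ea k) \<union> (\<Union>l. Eb l)"
  define A where "A = space M - F"
  have F_m: "F \<in> sets M" unfolding F_def using Ea_m Eb_m by auto
  have A_m: "A \<in> sets M" unfolding A_def using F_m by auto
  have "prob F \<le> prob (\<Union>k. Ea k) + prob (\<Union>l. Eb l)"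
    unfolding F_def by (rule measure_Un_le) (use Ea_m Eb_m in auto)
  also have "prob (\<Union>k. Ea k) \<le> (\<Sum>k\<in>UNIV. prob (Ea k))"
    by (rule finite_measure_subadditive_finite) (use Ea_m in auto)
  also have "\<dots> \<le> (\<Sum>k\<in>(UNIV::'k set). \<epsilon> / real CARD('k))" by (intro sum_mono Ea_p)
  also have "\<dots> = \<epsilon>" by simp
  also have "prob (\<Union>l. Eb l) \<le> (\<Sum>l\<in>UNIV. prob (Eb l))"
    by (rule finite_measure_subadditive_finite) (use Eb_m in auto)
  also have "\<dots> \<le> (\<Sum>l\<in>(UNIV::'q set). \<epsilon> / real CARD('q))" by (intro sum_mono Eb_p)
  also have "\<dots> = \<epsilon>" by simp
  finally have PF: "prob F \<le> 2 * \<epsilon>" by simp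
  have PA: "measure M A \<ge> 1 - 2 * \<epsilon>" unfolding A_def using prob_compl[OF F_m] PF by simp
  show ?thesis
  proof (intro bexI[where x=A] conjI ballI allI impI)
    show "A \<in> sets M" by (rule A_m)
    show "1 - 2 * \<epsilon> \<le> measure M A" by (rule PA)
  next
    fix \<omega> \<phi>h \<alpha>h vh assume \<omega>A: "\<omega> \<in> A" and mini: "schd_min X R G lam (Y \<omega>) \<phi>h \<alpha>h vh"
    have \<omega>: "\<omega> \<in> space M" using \<omega>A by (simp add: A_def)
    have evA: "(\<Sum>b\<in>B k. (\<Sum>t\<in>UNIV. b $ t * \<xi> \<omega> $ t)^2) \<le> real (card (B k)) + 2 * sqrt (real (card (B k)) * L) + 2 * L" for k
    proof -
      have "\<omega> \<notin> Ea k" using \<omega>A unfolding A_def F_def by blast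
      thus ?thesis using \<omega> unfolding Ea_def by (simp add: not_less)
    qed
    have evB: "(\<Sum>t\<in>UNIV. w l t * ((\<xi> \<omega> $ t)^2 - 1 + m t * \<xi> \<omega> $ t)) > - u l" for l
    proof -
      have "\<omega> \<notin> Eb l" using \<omega>A unfolding A_def F_def by blast
      thus ?thesis using \<omega> unfolding Eb_def by (simp add: not_le)
    qed
    have mod: "dmul (Y \<omega>) (R *v \<alpha>s) = X *v \<phi>s + \<xi> \<omega>" using model \<omega> by blast
    have Ymod: "Y \<omega> $ t * \<rho> t = m t + \<xi> \<omega> $ t" for t
      using arg_cong[OF mod, of "\<lambda>v. v $ t"] by (simp add: dmul_def \<rho>_def m_def)
    define \<phi>t where "\<phi>t = (1 + D) *\<^sub>R \<phi>s"
    define \<alpha>t where "\<alpha>t = (1 + D) *\<^sub>R \<alpha>s"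
    define vt where "vt = (\<chi> t. 1 / ((1 + D) * \<rho> t))"
    have D1p: "1 + D > 0" using D0 by simp
    have R\<alpha>t: "R *v \<alpha>t = (1 + D) *\<^sub>R (R *v \<alpha>s)" by (simp add: \<alpha>t_def matrix_vector_mult_scaleR)
    have res: "dmul (Y \<omega>) (R *v \<alpha>t) - X *v \<phi>t = (1 + D) *\<^sub>R \<xi> \<omega>"
    proof -
      have "dmul (Y \<omega>) (R *v \<alpha>t) = (1 + D) *\<^sub>R (X *v \<phi>s + \<xi> \<omega>)" by (simp only: R\<alpha>t dmul_scale mod)
      moreover have "X *v \<phi>t = (1 + D) *\<^sub>R (X *v \<phi>s)" by (simp add: \<phi>t_def matrix_vector_mult_scaleR)
      ultimately show ?thesis by (simp add: scaleR_right_distrib)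
    qed
    have lamk: "lam k = 2 * sqrt (real (card (B k)) + 2 * sqrt (real (card (B k)) * L) + 2 * L)" for k
      using lam_def Bcard[of k] by (simp add: L_def)
    have lam0: "\<forall>k. lam k \<ge> 0"
    proof
      fix k
      have "0 \<le> real (card (B k)) + 2 * sqrt (real (card (B k)) * L) + 2 * L"
        using L0 by (intro add_nonneg_nonneg) auto
      thus "lam k \<ge> 0" using lamk[of k] by simp
    qed
    have feas: "schd_feasible X R G lam (Y \<omega>) \<phi>t \<alpha>t vt"
      unfolding schd_feasible_def res
    proof (intro conjI allI)
      fix t show "0 \<le> vt $ t" unfolding vt_def using \<rho>0[of t] D1p by simp
      show "0 < vt $ t" unfolding vt_def using \<rho>0[of t] D1p by simp
      show "1 / vt $ t \<le> (R *v \<alpha>t) $ t" unfolding vt_def R\<alpha>t by (simp add: \<rho>_def)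
    next
      fix k
      let ?S = "(\<Sum>b\<in>B k. (\<Sum>t\<in>UNIV. b $ t * \<xi> \<omega> $ t)^2)"
      let ?Q = "real (card (B k)) + 2 * sqrt (real (card (B k)) * L) + 2 * L"
      have e1: "(norm (Proj X (G k) ((1 + D) *\<^sub>R \<xi> \<omega>)))^2 = (\<Sum>b\<in>B k. (b \<bullet> ((1 + D) *\<^sub>R \<xi> \<omega>))^2)"
        by (rule BnP[of k, rule_format])
      have ib: "b \<bullet> ((1 + D) *\<^sub>R \<xi> \<omega>) = (1 + D) * (\<Sum>t\<in>UNIV. b $ t * \<xi> \<omega> $ t)" for b :: "real^'T"
        by (simp only: inner_scaleR_right) (simp only: inner_vec_def inner_real_def)
      have e2: "(\<Sum>b\<in>B k. (b \<bullet> ((1 + D) *\<^sub>R \<xi> \<omega>))^2) = (1 + D)^2 * ?S"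
        unfolding ib by (simp only: power_mult_distrib) (simp only: sum_distrib_left)
      have S0: "0 \<le> ?S" by (rule sum_nonneg) simp
      have h4: "(1 + D)^2 \<le> 4" using power_mono[of "1 + D" 2 2] D0 D1 by simp
      have M1: "(1 + D)^2 * ?S \<le> 4 * ?Q" by (rule mult_mono[OF h4 evA[of k]]) (simp, rule S0)
      have Q0: "0 \<le> ?Q" using L0 by (intro add_nonneg_nonneg) auto
      have LQ: "(lam k)^2 = 4 * ?Q"
      proof -
        have "(lam k)^2 = (2 * sqrt ?Q)^2" by (simp only: lamk)
        also have "\<dots> = 2^2 * (sqrt ?Q)^2" by (rule power_mult_distrib)
        also have "(sqrt ?Q)^2 = ?Q" by (rule real_sqrt_pow2[OF Q0])
        finally show ?thesis by simp
      qed
      have "(norm (Proj X (G k) ((1 + D) *\<^sub>R \<xi> \<omega>)))^2 = (1 + D)^2 * ?S" using e1 e2 by (rule trans)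
      also have "\<dots> \<le> 4 * ?Q" by (rule M1)
      also have "\<dots> = (lam k)^2" by (rule LQ[symmetric])
      finally have NL: "(norm (Proj X (G k) ((1 + D) *\<^sub>R \<xi> \<omega>)))^2 \<le> (lam k)^2" .
      have "0 \<le> lam k" using lam0 by blast
      thus "norm (Proj X (G k) ((1 + D) *\<^sub>R \<xi> \<omega>)) \<le> lam k" by (rule power2_le_imp_le[OF NL])
    next
      fix l
      have lhs: "(transpose R *v vt) $ l = (\<Sum>t\<in>UNIV. w l t) / (1 + D)"
        unfolding transpose_mv vt_def w_def using D1p by (simp add: sum_divide_distrib mult.commute)
      have rhs: "(transpose R *v dmul (Y \<omega>) ((1 + D) *\<^sub>R \<xi> \<omega>)) $ l
          = (1 + D) * (\<Sum>t\<in>UNIV. w l t * ((\<xi> \<omega> $ t)^2 + m t * \<xi> \<omega> $ t))"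
      proof -
        have "R $ t $ l * (Y \<omega> $ t * ((1 + D) * \<xi> \<omega> $ t)) = (1 + D) * (w l t * ((\<xi> \<omega> $ t)^2 + m t * \<xi> \<omega> $ t))" for t
        proof -
          have Yt: "Y \<omega> $ t = (m t + \<xi> \<omega> $ t) / \<rho> t" using Ymod[of t] \<rho>0[of t] by (simp add: field_simps)
          show ?thesis unfolding Yt w_def using \<rho>0[of t] by (simp add: field_simps power2_eq_square)
        qed
        hence "R $ t $ l * (dmul (Y \<omega>) ((1 + D) *\<^sub>R \<xi> \<omega>)) $ t = (1 + D) * (w l t * ((\<xi> \<omega> $ t)^2 + m t * \<xi> \<omega> $ t))" for t
          by (simp only: dmul_def vec_lambda_beta vector_scaleR_component real_scaleR_def)
        thus ?thesis unfolding transpose_mv by (simp only: sum_distrib_left)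
      qed
      have "(\<Sum>t\<in>UNIV. w l t * ((\<xi> \<omega> $ t)^2 + m t * \<xi> \<omega> $ t)) > (\<Sum>t\<in>UNIV. w l t) / (1 + D)^2"
      proof -
        have "(\<Sum>t\<in>UNIV. w l t * ((\<xi> \<omega> $ t)^2 - 1 + m t * \<xi> \<omega> $ t))
            = (\<Sum>t\<in>UNIV. w l t * ((\<xi> \<omega> $ t)^2 + m t * \<xi> \<omega> $ t)) - (\<Sum>t\<in>UNIV. w l t)"
          by (simp add: sum_subtractf[symmetric] algebra_simps)
        moreover have "(\<Sum>t\<in>UNIV. w l t) * (1 - 1/(1+D)^2) = (\<Sum>t\<in>UNIV. w l t) - (\<Sum>t\<in>UNIV. w l t) / (1+D)^2"
          by (simp add: right_diff_distrib)
        ultimately show ?thesis using evB[of l] unfolding u_def by linarith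
      qed
      hence "(1 + D) * ((\<Sum>t\<in>UNIV. w l t) / (1 + D)^2) \<le> (1 + D) * (\<Sum>t\<in>UNIV. w l t * ((\<xi> \<omega> $ t)^2 + m t * \<xi> \<omega> $ t))"
        using D1p by (intro mult_left_mono) auto
      moreover have "(1 + D) * ((\<Sum>t\<in>UNIV. w l t) / (1 + D)^2) = (\<Sum>t\<in>UNIV. w l t) / (1 + D)"
        using D1p by (simp add: power2_eq_square)
      ultimately show "(transpose R *v vt) $ l \<le> (transpose R *v dmul (Y \<omega>) ((1 + D) *\<^sub>R \<xi> \<omega>)) $ l"
        unfolding lhs rhs by simp
    qed
    have supp: "\<forall>k. k \<notin> Kstar G \<phi>s \<longrightarrow> Xg X (G k) \<phi>t = 0"
    proof (intro allI impI)
      fix k assume k: "k \<notin> Kstar G \<phi>s"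
      hence "(\<Sum>j\<in>G k. \<bar>\<phi>s $ j\<bar>) = 0" by (simp add: Kstar_def)
      hence "\<forall>j\<in>G k. \<phi>s $ j = 0" by (simp add: sum_nonneg_eq_0_iff)
      hence "restr (G k) \<phi>s = 0" by (simp add: restr_def vec_eq_iff)
      hence "Xg X (G k) \<phi>s = 0" by (simp add: Xg_def)
      thus "Xg X (G k) \<phi>t = 0" by (simp add: \<phi>t_def Xg_scale)
    qed
    have ip: "\<forall>k w y. y \<in> colspace X (G k) \<longrightarrow> \<bar>y \<bullet> w\<bar> \<le> norm y * norm (Proj X (G k) w)"
      using Bip by blast
    have det: "norm (X *v (\<phi>h - \<phi>t)) \<le> norm (dmul (Y \<omega>) (R *v (\<alpha>h - \<alpha>t))) + 4 * sqrt (\<Sum>k\<in>Kstar G \<phi>s. (lam k)^2) / \<kappa>"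
      by (rule det_main[OF partition(2,3) lam0 ip gre kappa order_refl supp feas mini])
    define Z where "Z = 2 * real (sstar X G \<phi>s) + 3 * real (card (Kstar G \<phi>s)) * ln (real CARD('k) / \<epsilon>)"
    have SZ: "(\<Sum>k\<in>Kstar G \<phi>s. (lam k)^2) \<le> 4 * Z"
    proof -
      have "(\<Sum>k\<in>Kstar G \<phi>s. (lam k)^2) \<le> (\<Sum>k\<in>Kstar G \<phi>s. 4 * (2 * real (card (B k)) + 3 * L))"
        unfolding lamk using L0 by (intro sum_mono lam_sq_bound) auto
      also have "\<dots> = 4 * Z" unfolding Z_def sstar_def L_def using Bcard
        by (simp add: sum.distrib sum_distrib_left algebra_simps)
      finally show ?thesis .
    qed
    have Z0: "Z \<ge> 0" unfolding Z_def using L0 by (simp add: L_def[symmetric])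
    have t2: "4 * sqrt (\<Sum>k\<in>Kstar G \<phi>s. (lam k)^2) / \<kappa> \<le> (8 / \<kappa>) * sqrt Z"
    proof -
      have "sqrt (\<Sum>k\<in>Kstar G \<phi>s. (lam k)^2) \<le> sqrt (4 * Z)" using SZ by simp
      also have "\<dots> = 2 * sqrt Z" by (simp add: real_sqrt_mult)
      finally show ?thesis using kappa by (simp add: divide_right_mono)
    qed
    have P1: "norm (X *v (\<phi>h - \<phi>s)) \<le> norm (X *v (\<phi>h - \<phi>t)) + D * norm (X *v \<phi>s)"
    proof -
      have "X *v (\<phi>h - \<phi>s) = X *v (\<phi>h - \<phi>t) + D *\<^sub>R (X *v \<phi>s)"
        by (simp add: \<phi>t_def matrix_vector_mult_diff_distrib matrix_vector_mult_scaleR algebra_simps)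
      hence "norm (X *v (\<phi>h - \<phi>s)) \<le> norm (X *v (\<phi>h - \<phi>t)) + norm (D *\<^sub>R (X *v \<phi>s))"
        by (simp only: norm_triangle_ineq)
      thus ?thesis using D0 by simp
    qed
    have P2: "norm (dmul (Y \<omega>) (R *v (\<alpha>h - \<alpha>t))) \<le> norm (dmul (Y \<omega>) (R *v (\<alpha>h - \<alpha>s))) + D * (norm (X *v \<phi>s) + norm (\<xi> \<omega>))"
    proof -
      have "dmul (Y \<omega>) (R *v (\<alpha>h - \<alpha>t)) = dmul (Y \<omega>) (R *v (\<alpha>h - \<alpha>s)) - D *\<^sub>R (X *v \<phi>s + \<xi> \<omega>)"
      proof -
        have "\<alpha>h - \<alpha>t = (\<alpha>h - \<alpha>s) - D *\<^sub>R \<alpha>s" by (simp add: \<alpha>t_def algebra_simps)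
        hence "R *v (\<alpha>h - \<alpha>t) = R *v (\<alpha>h - \<alpha>s) - D *\<^sub>R (R *v \<alpha>s)"
          by (simp only: matrix_vector_mult_diff_distrib matrix_vector_mult_scaleR)
        hence "dmul (Y \<omega>) (R *v (\<alpha>h - \<alpha>t)) = dmul (Y \<omega>) (R *v (\<alpha>h - \<alpha>s)) - D *\<^sub>R dmul (Y \<omega>) (R *v \<alpha>s)"
          by (simp only: dmul_diff dmul_scale)
        thus ?thesis by (simp only: mod)
      qed
      hence "norm (dmul (Y \<omega>) (R *v (\<alpha>h - \<alpha>t))) \<le> norm (dmul (Y \<omega>) (R *v (\<alpha>h - \<alpha>s))) + norm (D *\<^sub>R (X *v \<phi>s + \<xi> \<omega>))"
        by (simp only: norm_triangle_ineq4)
      hence "norm (dmul (Y \<omega>) (R *v (\<alpha>h - \<alpha>t))) \<le> norm (dmul (Y \<omega>) (R *v (\<alpha>h - \<alpha>s))) + D * norm (X *v \<phi>s + \<xi> \<omega>)"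
        using D0 by simp
      also have "D * norm (X *v \<phi>s + \<xi> \<omega>) \<le> D * (norm (X *v \<phi>s) + norm (\<xi> \<omega>))"
        using D0 by (intro mult_left_mono norm_triangle_ineq) auto
      finally show ?thesis by simp
    qed
    have "norm (X *v (\<phi>h - \<phi>s)) \<le> D * (2 * norm (X *v \<phi>s) + norm (\<xi> \<omega>)) + (8 / \<kappa>) * sqrt Z + norm (dmul (Y \<omega>) (R *v (\<alpha>h - \<alpha>s)))"
    proof -
      have "D * (2 * norm (X *v \<phi>s) + norm (\<xi> \<omega>)) = D * norm (X *v \<phi>s) + D * (norm (X *v \<phi>s) + norm (\<xi> \<omega>))"
        by (simp add: algebra_simps)
      thus ?thesis using P1 P2 det t2 by linarith
    qed
    thus "norm (X *v (\<phi>h - \<phi>s)) \<le>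
         C4 X R \<phi>s \<alpha>s * sqrt ((8 / real CARD('T)) * ln (2 * real CARD('q) / \<epsilon>))
             * (2 * norm (X *v \<phi>s) + norm (\<xi> \<omega>))
         + (8 / \<kappa>) * sqrt (2 * real (sstar X G \<phi>s) + 3 * real (card (Kstar G \<phi>s)) * ln (real CARD('k) / \<epsilon>))
         + norm (dmul (Y \<omega>) (R *v (\<alpha>h - \<alpha>s)))"
      unfolding D_def Z_def .
  qed
qed

end
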